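(* Let $p\ge 0$ be an integer, $\kappa=\frac12(p+1)(p+2)$, and define $N_p(R)=\sum_{\sigma\in X_{p+1}}W_2(\sigma,R)$ and $D_p(R)=\sum_{\sigma\in X_{p-1}}W_0(\sigma,R)$. Then \[N_p(R)=R^{\kappa}+\tfrac{(p+1)^2(p+2)}{2}R^{\kappa-1}+\tfrac{p(p+1)^3(p+2)(p+3)}{8}R^{\kappa-2}+O(R^{\kappa-3}),\] \[D_p(R)=R^{\kappa-2p-1}+\tfrac{(p-1)p(p+1)}{2}R^{\kappa-2p-2}+\tfrac{(p-2)(p-1)p(p+1)^3}{8}R^{\kappa-2p-3}+O(R^{\kappa-2p-4}),\] where $O(R^m)$ denotes a polynomial of degree at most $m$.
   Context: A Schröder path is a finite directed path in $\mathbb{Z}^2$ each of whose steps is an ascent $(x,y)\to(x+1,y+1)$, a descent $(x,y)\to(x+1,y-1)$, or a flat step $(x,y)\to(x+2,y)$ (the empty path is allowed). Let $P_i=(-i,i)$, $Q_i=(i,i)$. For $k\ge0$, $X_k$ is the set of collections of $k+1$ pairwise vertex-disjoint Schröder paths from $\{P_i\}_{i=0}^k$ to $\{Q_i\}_{i=0}^k$; $X_{-1}$ consists only of the empty collection. $W_0(\sigma,R)$ is the product over all steps of $\sigma$ of: $1$ per ascent, $R$ per flat step, $y+1$ per descent starting at height $y$. $W_2(\sigma,R)$ is the same but with $y-1$ per descent starting at height $y$. Empty products are $1$. *)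

theory Defs
  imports "HOL-Computational_Algebra.Polynomial"
begin

datatype sstep = Asc | Desc | Flat

fun move :: "int \<times> int \<Rightarrow> sstep \<Rightarrow> int \<times> int" where
  "move (x, y) Asc = (x + 1, y + 1)"
| "move (x, y) Desc = (x + 1, y - 1)"
| "move (x, y) Flat = (x + 2, y)"

fun verts :: "int \<times> int \<Rightarrow> sstep list \<Rightarrow> (int \<times> int) list" where
  "verts p [] = [p]"
| "verts p (s # ss) = p # verts (move p s) ss"

definition endpt :: "int \<times> int \<Rightarrow> sstep list \<Rightarrow> int \<times> int" where
  "endpt p ss = last (verts p ss)"

fun pathW :: "(int \<Rightarrow> real) \<Rightarrow> real \<Rightarrow> int \<times> int \<Rightarrow> sstep list \<Rightarrow> real" where
  "pathW d R p [] = 1"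
| "pathW d R p (Asc # ss) = pathW d R (move p Asc) ss"
| "pathW d R p (Desc # ss) = d (snd p) * pathW d R (move p Desc) ss"
| "pathW d R p (Flat # ss) = R * pathW d R (move p Flat) ss"

definition Pt :: "nat \<Rightarrow> int \<times> int" where "Pt i = (- int i, int i)"
definition Qt :: "nat \<Rightarrow> int \<times> int" where "Qt i = (int i, int i)"

definition idx :: "int \<Rightarrow> nat set" where "idx k = {i. int i \<le> k}"

text \<open>A collection is encoded by the function sending i to the step list of the
  path starting at P_i (starting points are distinct, so this is a bijective encoding);
  unused indices carry the empty list. For k = -1 the only element is the empty collection.\<close>
definition X :: "int \<Rightarrow> (nat \<Rightarrow> sstep list) set" where
  "X k = {\<sigma>. (\<forall>i. i \<notin> idx k \<longrightarrow> \<sigma> i = []) \<and>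
              (\<lambda>i. endpt (Pt i) (\<sigma> i)) ` idx k = Qt ` idx k \<and>
              (\<forall>i\<in>idx k. \<forall>j\<in>idx k. i \<noteq> j \<longrightarrow>
                 set (verts (Pt i) (\<sigma> i)) \<inter> set (verts (Pt j) (\<sigma> j)) = {})}"

definition W0 :: "int \<Rightarrow> (nat \<Rightarrow> sstep list) \<Rightarrow> real \<Rightarrow> real" where
  "W0 k \<sigma> R = (\<Prod>i\<in>idx k. pathW (\<lambda>y. of_int y + 1) R (Pt i) (\<sigma> i))"

definition W2 :: "int \<Rightarrow> (nat \<Rightarrow> sstep list) \<Rightarrow> real \<Rightarrow> real" where
  "W2 k \<sigma> R = (\<Prod>i\<in>idx k. pathW (\<lambda>y. of_int y - 1) R (Pt i) (\<sigma> i))"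

definition Np :: "nat \<Rightarrow> real \<Rightarrow> real" where
  "Np p R = (\<Sum>\<sigma>\<in>X (int p + 1). W2 (int p + 1) \<sigma> R)"

definition Dp :: "nat \<Rightarrow> real \<Rightarrow> real" where
  "Dp p R = (\<Sum>\<sigma>\<in>X (int p - 1). W0 (int p - 1) \<sigma> R)"

definition bigO_poly :: "real poly \<Rightarrow> int \<Rightarrow> bool" where
  "bigO_poly E m = (if m < 0 then E = 0 else degree E \<le> nat m)"

end

theory Submission
  imports Defs
begin


abbreviation cA where "cA ss \<equiv> count_list ss Asc"
abbreviation cD where "cD ss \<equiv> count_list ss Desc"
abbreviation cF where "cF ss \<equiv> count_list ss Flat"

lemma len_count: "length ss = cA ss + cD ss + cF ss"
proof (induction ss)
  case (Cons s ss) then show ?case by (cases s) auto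
qed simp

lemma verts_ne: "verts p ss \<noteq> []"
  by (cases ss) auto

lemma hd_verts: "p \<in> set (verts p ss)"
  by (cases ss) auto

lemma endpt_Nil[simp]: "endpt p [] = p" by (simp add: endpt_def)
lemma endpt_Cons[simp]: "endpt p (s # ss) = endpt (move p s) ss"
  by (simp add: endpt_def verts_ne)

lemma endpt_in: "endpt p ss \<in> set (verts p ss)"
  unfolding endpt_def by (simp add: verts_ne)

lemma move_fst: "fst (move p s) = fst p + (if s = Flat then 2 else 1)"
  by (cases p; cases s) auto
lemma move_snd: "snd (move p s) = snd p + (if s = Asc then 1 else if s = Desc then -1 else 0)"
  by (cases p; cases s) auto

lemma endpt_fst: "fst (endpt p ss) = fst p + int (cA ss) + int (cD ss) + 2 * int (cF ss)"
proof (induction ss arbitrary: p)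
  case (Cons s ss) then show ?case by (cases s) (auto simp: move_fst)
qed simp
lemma endpt_snd: "snd (endpt p ss) = snd p + int (cA ss) - int (cD ss)"
  by (induction ss arbitrary: p) (auto simp: move_snd)

lemma verts_x_aux: "fst p \<le> fst (endpt p ss)"
  by (simp add: endpt_fst)

lemma verts_x: "v \<in> set (verts p ss) \<Longrightarrow> fst p \<le> fst v \<and> fst v \<le> fst (endpt p ss)"
proof (induction ss arbitrary: p)
  case Nil then show ?case by simp
next
  case (Cons s ss)
  show ?case
  proof (cases "v = p")
    case True
    have "fst (move p s) \<le> fst (endpt (move p s) ss)" using verts_x_aux by blast
    then show ?thesis using True move_fst[of p s] by (auto split: if_splits)
  next
    case False
    then have "v \<in> set (verts (move p s) ss)" using Cons.prems by simp
    from Cons.IH[OF this] show ?thesis using move_fst[of p s] by (auto split: if_splits)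
  qed
qed

lemma verts_par: "even (fst p + snd p) \<Longrightarrow> v \<in> set (verts p ss) \<Longrightarrow> even (fst v + snd v)"
proof (induction ss arbitrary: p)
  case Nil then show ?case by simp
next
  case (Cons s ss)
  have "even (fst (move p s) + snd (move p s))" using Cons.prems(1) move_fst[of p s] move_snd[of p s]
    by (cases s) auto
  show ?case
  proof (cases "v = p")
    case True then show ?thesis using Cons.prems by simp
  next
    case False
    then have "v \<in> set (verts (move p s) ss)" using Cons.prems by simp
    from Cons.IH[OF \<open>even (fst (move p s) + snd (move p s))\<close> this] show ?thesis .
  qed
qed

fun hgt :: "int \<times> int \<Rightarrow> sstep list \<Rightarrow> int \<Rightarrow> int" where
  "hgt (x, y) [] t = y"
| "hgt (x, y) (s # ss) t = (if t \<le> x then y else if s = Flat \<and> t = x + 1 then y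
      else hgt (move (x, y) s) ss t)"

lemma hgt_le: "t \<le> fst p \<Longrightarrow> hgt p ss t = snd p"
  by (cases p; cases ss) auto

lemma hgt_vert: "v \<in> set (verts p ss) \<Longrightarrow> hgt p ss (fst v) = snd v"
proof (induction ss arbitrary: p)
  case Nil then show ?case by (cases p) auto
next
  case (Cons s ss)
  obtain x y where p: "p = (x,y)" by fastforce
  show ?case
  proof (cases "v = p")
    case True then show ?thesis using p by simp
  next
    case False
    then have v: "v \<in> set (verts (move p s) ss)" using Cons.prems by simp
    then have "fst (move p s) \<le> fst v" using verts_x by blast
    then have "fst v > x" "\<not> (s = Flat \<and> fst v = x + 1)" using move_fst[of p s] p by (auto split: if_splits)
    then show ?thesis using Cons.IH[OF v] p by auto
  qed
qed

lemma hgt_cases: "fst p \<le> t \<Longrightarrow> t \<le> fst (endpt p ss) \<Longrightarrow>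
   (t, hgt p ss t) \<in> set (verts p ss) \<or>
   ((t - 1, hgt p ss t) \<in> set (verts p ss) \<and> (t + 1, hgt p ss t) \<in> set (verts p ss))"
proof (induction ss arbitrary: p)
  case Nil then show ?case by (cases p) auto
next
  case (Cons s ss)
  obtain x y where p: "p = (x,y)" by fastforce
  show ?case
  proof (cases "t = x")
    case True then show ?thesis using p by simp
  next
    case False
    show ?thesis
    proof (cases "s = Flat \<and> t = x + 1")
      case True
      then show ?thesis using p hd_verts[of "(x+2,y)" ss] by (auto simp: algebra_simps)
    next
      case F2: False
      have "fst (move p s) \<le> t" using Cons.prems(1) False F2 p move_fst[of p s] by (auto split: if_splits)
      moreover have "t \<le> fst (endpt (move p s) ss)" using Cons.prems(2) by simp
      ultimately have "(t, hgt (move p s) ss t) \<in> set (verts (move p s) ss) \<or>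
        ((t - 1, hgt (move p s) ss t) \<in> set (verts (move p s) ss) \<and> (t + 1, hgt (move p s) ss t) \<in> set (verts (move p s) ss))"
        using Cons.IH by blast
      moreover have "hgt p (s # ss) t = hgt (move p s) ss t" using False F2 p Cons.prems(1) by auto
      ultimately show ?thesis by auto
    qed
  qed
qed

lemma hgt_step: "fst p \<le> t \<Longrightarrow> t < fst (endpt p ss) \<Longrightarrow>
   \<bar>hgt p ss (t+1) - hgt p ss t\<bar> \<le> 1 \<and>
   ((t, hgt p ss t) \<notin> set (verts p ss) \<longrightarrow> hgt p ss (t+1) = hgt p ss t)"
proof (induction ss arbitrary: p)
  case Nil then show ?case by simp
next
  case (Cons s ss)
  obtain x y where p: "p = (x,y)" by fastforce
  show ?case
  proof (cases "t = x")
    case True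
    have "hgt (move p s) ss (x+1) = snd (move p s) \<or> s = Flat"
      using hgt_le[of "x+1" "move p s" ss] move_fst[of p s] p by auto
    then show ?thesis using True p move_snd[of p s] by (cases s) auto
  next
    case False
    show ?thesis
    proof (cases "s = Flat \<and> t = x + 1")
      case True
      have "hgt (x + 2, y) ss (x+2) = y" using hgt_le[of "x+2" "(x+2,y)" ss] by simp
      then show ?thesis using p True by (auto simp: add.commute)
    next
      case F2: False
      have "fst (move p s) \<le> t" using Cons.prems(1) False F2 p move_fst[of p s] by (auto split: if_splits)
      moreover have "t < fst (endpt (move p s) ss)" using Cons.prems(2) by simp
      ultimately have IH: "\<bar>hgt (move p s) ss (t+1) - hgt (move p s) ss t\<bar> \<le> 1 \<and>
   ((t, hgt (move p s) ss t) \<notin> set (verts (move p s) ss) \<longrightarrow> hgt (move p s) ss (t+1) = hgt (move p s) ss t)"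
        using Cons.IH by blast
      moreover have "hgt p (s # ss) t = hgt (move p s) ss t" using False F2 p Cons.prems(1) by auto
      moreover have "hgt p (s # ss) (t+1) = hgt (move p s) ss (t+1)" using False F2 p Cons.prems(1) by auto
      ultimately show ?thesis by auto
    qed
  qed
qed

lemma hgt_lip: "fst p \<le> t \<Longrightarrow> t \<le> t' \<Longrightarrow> t' \<le> fst (endpt p ss) \<Longrightarrow>
   \<bar>hgt p ss t' - hgt p ss t\<bar> \<le> t' - t"
proof -
  assume a: "fst p \<le> t" "t \<le> t'" "t' \<le> fst (endpt p ss)"
  have "\<And>n. t + int n \<le> fst (endpt p ss) \<Longrightarrow> \<bar>hgt p ss (t + int n) - hgt p ss t\<bar> \<le> int n"
  proof -
    fix n show "t + int n \<le> fst (endpt p ss) \<Longrightarrow> \<bar>hgt p ss (t + int n) - hgt p ss t\<bar> \<le> int n"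
    proof (induction n)
      case 0 then show ?case by simp
    next
      case (Suc n)
      have "\<bar>hgt p ss (t + int n + 1) - hgt p ss (t + int n)\<bar> \<le> 1"
        using hgt_step[of p "t + int n" ss] Suc.prems a(1) by simp
      moreover have "t + int (Suc n) = t + int n + 1" by simp
      ultimately show ?case using Suc by (smt (verit))
    qed
  qed
  from this[of "nat (t' - t)"] a show ?thesis by simp
qed

lemma hgt_start: "hgt p ss (fst p) = snd p" by (simp add: hgt_le)
lemma hgt_end: "hgt p ss (fst (endpt p ss)) = snd (endpt p ss)"
  using hgt_vert[OF endpt_in] .



lemma hgt_neq:
  assumes e1: "even (fst p1 + snd p1)" and e2: "even (fst p2 + snd p2)"
    and dj: "set (verts p1 ss1) \<inter> set (verts p2 ss2) = {}"
    and d1: "fst p1 \<le> t" "t \<le> fst (endpt p1 ss1)"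
    and d2: "fst p2 \<le> t" "t \<le> fst (endpt p2 ss2)"
  shows "hgt p1 ss1 t \<noteq> hgt p2 ss2 t"
proof
  assume eq: "hgt p1 ss1 t = hgt p2 ss2 t"
  define h where "h = hgt p1 ss1 t"
  have c1: "(t, h) \<in> set (verts p1 ss1) \<or> ((t - 1, h) \<in> set (verts p1 ss1) \<and> (t + 1, h) \<in> set (verts p1 ss1))"
    using hgt_cases[OF d1] h_def by simp
  have c2: "(t, h) \<in> set (verts p2 ss2) \<or> ((t - 1, h) \<in> set (verts p2 ss2) \<and> (t + 1, h) \<in> set (verts p2 ss2))"
    using hgt_cases[OF d2] h_def eq by simp
  have par1: "\<And>v. v \<in> set (verts p1 ss1) \<Longrightarrow> even (fst v + snd v)" using verts_par[OF e1] by blast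
  have par2: "\<And>v. v \<in> set (verts p2 ss2) \<Longrightarrow> even (fst v + snd v)" using verts_par[OF e2] by blast
  show False
  proof (cases "(t, h) \<in> set (verts p1 ss1)")
    case True
    then have "even (t + h)" using par1 by fastforce
    show False
    proof (cases "(t, h) \<in> set (verts p2 ss2)")
      case True then show False using \<open>(t, h) \<in> set (verts p1 ss1)\<close> dj by blast
    next
      case False
      then have "(t - 1, h) \<in> set (verts p2 ss2)" using c2 by blast
      then have "even (t - 1 + h)" using par2 by fastforce
      then show False using \<open>even (t + h)\<close> by simp
    qed
  next
    case False
    then have a1: "(t - 1, h) \<in> set (verts p1 ss1)" using c1 by blast
    then have "even (t - 1 + h)" using par1 by fastforce
    show False
    proof (cases "(t, h) \<in> set (verts p2 ss2)")
      case True
      then have "even (t + h)" using par2 by fastforce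
      then show False using \<open>even (t - 1 + h)\<close> by simp
    next
      case False
      then have "(t - 1, h) \<in> set (verts p2 ss2)" using c2 by blast
      then show False using a1 dj by blast
    qed
  qed
qed

lemma hgt_order:
  assumes e1: "even (fst p1 + snd p1)" and e2: "even (fst p2 + snd p2)"
    and dj: "set (verts p1 ss1) \<inter> set (verts p2 ss2) = {}"
    and s1: "fst p1 \<le> t0" and s2: "fst p2 \<le> t0" and t01: "t0 \<le> t1"
    and f1: "t1 \<le> fst (endpt p1 ss1)" and f2: "t1 \<le> fst (endpt p2 ss2)"
    and lt: "hgt p1 ss1 t0 < hgt p2 ss2 t0"
  shows "hgt p1 ss1 t1 < hgt p2 ss2 t1"
proof -
  have par1: "\<And>v. v \<in> set (verts p1 ss1) \<Longrightarrow> even (fst v + snd v)" using verts_par[OF e1] by blast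
  have par2: "\<And>v. v \<in> set (verts p2 ss2) \<Longrightarrow> even (fst v + snd v)" using verts_par[OF e2] by blast
  have "\<And>n. t0 + int n \<le> t1 \<Longrightarrow> hgt p1 ss1 (t0 + int n) < hgt p2 ss2 (t0 + int n)"
  proof -
    fix n show "t0 + int n \<le> t1 \<Longrightarrow> hgt p1 ss1 (t0 + int n) < hgt p2 ss2 (t0 + int n)"
    proof (induction n)
      case 0 then show ?case using lt by simp
    next
      case (Suc n)
      define t where "t = t0 + int n"
      have tt: "t0 + int (Suc n) = t + 1" using t_def by simp
      have lt_t: "hgt p1 ss1 t < hgt p2 ss2 t" using Suc t_def by simp
      have st1: "\<bar>hgt p1 ss1 (t+1) - hgt p1 ss1 t\<bar> \<le> 1 \<and>
         ((t, hgt p1 ss1 t) \<notin> set (verts p1 ss1) \<longrightarrow> hgt p1 ss1 (t+1) = hgt p1 ss1 t)"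
        using hgt_step[of p1 t ss1] s1 f1 Suc.prems t_def by simp
      have st2: "\<bar>hgt p2 ss2 (t+1) - hgt p2 ss2 t\<bar> \<le> 1 \<and>
         ((t, hgt p2 ss2 t) \<notin> set (verts p2 ss2) \<longrightarrow> hgt p2 ss2 (t+1) = hgt p2 ss2 t)"
        using hgt_step[of p2 t ss2] s2 f2 Suc.prems t_def by simp
      have ne: "hgt p1 ss1 (t+1) \<noteq> hgt p2 ss2 (t+1)"
        using hgt_neq[OF e1 e2 dj] s1 s2 f1 f2 Suc.prems t_def by simp
      show ?case
      proof (rule ccontr)
        assume "\<not> ?case"
        then have nc: "\<not> hgt p1 ss1 (t+1) < hgt p2 ss2 (t+1)" unfolding tt .
        then have ge: "hgt p1 ss1 (t+1) > hgt p2 ss2 (t+1)" using ne by linarith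
        then have a: "hgt p2 ss2 t = hgt p1 ss1 t + 1" and b: "hgt p1 ss1 (t+1) = hgt p1 ss1 t + 1"
          and c: "hgt p2 ss2 (t+1) = hgt p2 ss2 t - 1"
          using st1 st2 lt_t by auto
        have v1: "(t, hgt p1 ss1 t) \<in> set (verts p1 ss1)" using st1 b by auto
        have v2: "(t, hgt p2 ss2 t) \<in> set (verts p2 ss2)" using st2 c by auto
        have "even (t + hgt p1 ss1 t)" using par1[OF v1] by simp
        moreover have "even (t + hgt p2 ss2 t)" using par2[OF v2] by simp
        ultimately show False using a by simp
      qed
    qed
  qed
  from this[of "nat (t1 - t0)"] t01 show ?thesis by simp
qed

lemma idx_nat[simp]: "idx (int m) = {..m}" by (auto simp: idx_def)
lemma Pt_par: "even (fst (Pt i) + snd (Pt i))" by (simp add: Pt_def)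

abbreviation H where "H \<sigma> i \<equiv> hgt (Pt i) (\<sigma> i)"

lemma X_out: "\<sigma> \<in> X (int m) \<Longrightarrow> i > m \<Longrightarrow> \<sigma> i = []"
  by (auto simp: X_def)
lemma X_end: "\<sigma> \<in> X (int m) \<Longrightarrow> i \<le> m \<Longrightarrow> \<exists>j\<le>m. endpt (Pt i) (\<sigma> i) = Qt j"
proof -
  assume a: "\<sigma> \<in> X (int m)" "i \<le> m"
  then have "endpt (Pt i) (\<sigma> i) \<in> (\<lambda>i. endpt (Pt i) (\<sigma> i)) ` {..m}" by simp
  also have "... = Qt ` {..m}" using a(1) unfolding X_def by simp
  finally show ?thesis by auto
qed
lemma X_disj: "\<sigma> \<in> X (int m) \<Longrightarrow> i \<le> m \<Longrightarrow> j \<le> m \<Longrightarrow> i \<noteq> j \<Longrightarrow>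
    set (verts (Pt i) (\<sigma> i)) \<inter> set (verts (Pt j) (\<sigma> j)) = {}"
  unfolding X_def by auto

lemma X_endpt:
  assumes X: "\<sigma> \<in> X (int m)" and im: "i \<le> m"
  shows "endpt (Pt i) (\<sigma> i) = Qt i"
proof -
  define e where "e i = fst (endpt (Pt i) (\<sigma> i))" for i
  have E: "\<And>i. i \<le> m \<Longrightarrow> endpt (Pt i) (\<sigma> i) = (e i, e i) \<and> 0 \<le> e i \<and> e i \<le> int m"
  proof -
    fix i assume "i \<le> m"
    from X_end[OF X this] obtain j where "j \<le> m" "endpt (Pt i) (\<sigma> i) = Qt j" by blast
    then show "endpt (Pt i) (\<sigma> i) = (e i, e i) \<and> 0 \<le> e i \<and> e i \<le> int m"
      by (simp add: e_def Qt_def)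
  qed
  have mono: "\<And>i j. i < j \<Longrightarrow> j \<le> m \<Longrightarrow> e i < e j"
  proof (rule ccontr)
    fix i j assume ij: "i < j" "j \<le> m" and nlt: "\<not> e i < e j"
    have im: "i \<le> m" using ij by simp
    have dj: "set (verts (Pt i) (\<sigma> i)) \<inter> set (verts (Pt j) (\<sigma> j)) = {}"
      using X_disj[OF X im ij(2)] ij by simp
    have Ei: "endpt (Pt i) (\<sigma> i) = (e i, e i)" "0 \<le> e i" using E[OF im] by auto
    have Ej: "endpt (Pt j) (\<sigma> j) = (e j, e j)" "0 \<le> e j" using E[OF ij(2)] by auto
    have "e i \<noteq> e j"
    proof
      assume "e i = e j"
      then have "endpt (Pt i) (\<sigma> i) \<in> set (verts (Pt j) (\<sigma> j))" using Ei Ej endpt_in[of "Pt j" "\<sigma> j"] by simp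
      then show False using dj endpt_in[of "Pt i" "\<sigma> i"] by blast
    qed
    then have lt: "e j < e i" using nlt by simp
    have hi0: "H \<sigma> i (- int i) = int i" using hgt_start[of "Pt i" "\<sigma> i"] by (simp add: Pt_def)
    have "\<bar>H \<sigma> j (- int i) - H \<sigma> j (- int j)\<bar> \<le> - int i - - int j"
      using hgt_lip[of "Pt j" "- int j" "- int i" "\<sigma> j"] Ej ij by (simp add: Pt_def)
    moreover have "H \<sigma> j (- int j) = int j" using hgt_start[of "Pt j" "\<sigma> j"] by (simp add: Pt_def)
    ultimately have "H \<sigma> j (- int i) \<ge> int i" by simp
    moreover have "H \<sigma> i (- int i) \<noteq> H \<sigma> j (- int i)"
      using hgt_neq[OF Pt_par Pt_par dj, of "- int i"] Ei Ej ij by (simp add: Pt_def)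
    ultimately have l0: "H \<sigma> i (- int i) < H \<sigma> j (- int i)" using hi0 by simp
    have "H \<sigma> i (e j) < H \<sigma> j (e j)"
      using hgt_order[OF Pt_par Pt_par dj, of "- int i" "e j", OF _ _ _ _ _ l0] Ei Ej ij lt
      by (simp add: Pt_def)
    moreover have "H \<sigma> j (e j) = e j" using hgt_end[of "Pt j" "\<sigma> j"] Ej by simp
    moreover have "\<bar>H \<sigma> i (e i) - H \<sigma> i (e j)\<bar> \<le> e i - e j"
      using hgt_lip[of "Pt i" "e j" "e i" "\<sigma> i"] Ei Ej lt by (simp add: Pt_def)
    moreover have "H \<sigma> i (e i) = e i" using hgt_end[of "Pt i" "\<sigma> i"] Ei by simp
    ultimately show False by simp
  qed
  have ge: "\<And>i. i \<le> m \<Longrightarrow> e i \<ge> int i"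
  proof -
    fix i show "i \<le> m \<Longrightarrow> e i \<ge> int i"
    proof (induction i)
      case 0 then show ?case using E by simp
    next
      case (Suc i) then show ?case using mono[of i "Suc i"] by simp
    qed
  qed
  have le: "\<And>k. k \<le> m \<Longrightarrow> e (m - k) \<le> int (m - k)"
  proof -
    fix k show "k \<le> m \<Longrightarrow> e (m - k) \<le> int (m - k)"
    proof (induction k)
      case 0 then show ?case using E by simp
    next
      case (Suc k)
      have "e (m - Suc k) < e (m - k)" using mono[of "m - Suc k" "m - k"] Suc.prems by simp
      moreover have "int (m - k) = int (m - Suc k) + 1" using Suc.prems by simp
      ultimately show ?case using Suc by simp
    qed
  qed
  have "e i = int i" using ge[OF im] le[of "m - i"] im by simp
  then show ?thesis using E[OF im] by (simp add: Qt_def)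
qed



definition asc :: "nat \<Rightarrow> (nat \<Rightarrow> sstep list) \<Rightarrow> nat" where
  "asc m \<sigma> = (\<Sum>i\<le>m. cA (\<sigma> i))"

lemma X_counts:
  assumes X: "\<sigma> \<in> X (int m)" and im: "i \<le> m"
  shows "cD (\<sigma> i) = cA (\<sigma> i)" "cF (\<sigma> i) + cA (\<sigma> i) = i"
proof -
  have e: "endpt (Pt i) (\<sigma> i) = Qt i" using X_endpt[OF X im] .
  have "snd (endpt (Pt i) (\<sigma> i)) = int i" using e by (simp add: Qt_def)
  then show c: "cD (\<sigma> i) = cA (\<sigma> i)" using endpt_snd[of "Pt i" "\<sigma> i"] by (simp add: Pt_def)
  have "fst (endpt (Pt i) (\<sigma> i)) = int i" using e by (simp add: Qt_def)
  then show "cF (\<sigma> i) + cA (\<sigma> i) = i" using endpt_fst[of "Pt i" "\<sigma> i"] c by (simp add: Pt_def)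
qed

lemma X_fst_end: "\<sigma> \<in> X (int m) \<Longrightarrow> i \<le> m \<Longrightarrow> fst (endpt (Pt i) (\<sigma> i)) = int i"
  using X_endpt by (simp add: Qt_def)
lemma X_snd_end: "\<sigma> \<in> X (int m) \<Longrightarrow> i \<le> m \<Longrightarrow> snd (endpt (Pt i) (\<sigma> i)) = int i"
  using X_endpt by (simp add: Qt_def)

lemma H_start: "H \<sigma> i (- int i) = int i"
  using hgt_start[of "Pt i" "\<sigma> i"] by (simp add: Pt_def)
lemma H_end: "\<sigma> \<in> X (int m) \<Longrightarrow> i \<le> m \<Longrightarrow> H \<sigma> i (int i) = int i"
  using hgt_end[of "Pt i" "\<sigma> i"] X_fst_end X_snd_end by metis

lemma X_nb_order:
  assumes X: "\<sigma> \<in> X (int m)" and im: "i < m" and t: "- int i \<le> t" "t \<le> int i"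
  shows "H \<sigma> i t < H \<sigma> (Suc i) t"
proof -
  have dj: "set (verts (Pt i) (\<sigma> i)) \<inter> set (verts (Pt (Suc i)) (\<sigma> (Suc i))) = {}"
    using X_disj[OF X, of i "Suc i"] im by simp
  have f1: "fst (endpt (Pt i) (\<sigma> i)) = int i" using X_fst_end[OF X] im by simp
  have f2: "fst (endpt (Pt (Suc i)) (\<sigma> (Suc i))) = int i + 1" using X_fst_end[OF X, of "Suc i"] im by simp
  have "\<bar>H \<sigma> (Suc i) (- int i) - H \<sigma> (Suc i) (- int (Suc i))\<bar> \<le> - int i - - int (Suc i)"
    using hgt_lip[of "Pt (Suc i)" "- int (Suc i)" "- int i" "\<sigma> (Suc i)"] f2 by (simp add: Pt_def)
  then have "H \<sigma> (Suc i) (- int i) \<ge> int i" using H_start[where \<sigma>=\<sigma> and i="Suc i"] by simp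
  moreover have "H \<sigma> i (- int i) \<noteq> H \<sigma> (Suc i) (- int i)"
    using hgt_neq[OF Pt_par Pt_par dj, of "- int i"] f1 f2 by (simp add: Pt_def)
  ultimately have l0: "H \<sigma> i (- int i) < H \<sigma> (Suc i) (- int i)" using H_start[where \<sigma>=\<sigma> and i=i] by simp
  show ?thesis
    using hgt_order[OF Pt_par Pt_par dj, of "- int i" t, OF _ _ _ _ _ l0] f1 f2 t
    by (simp add: Pt_def)
qed

lemma X_down:
  assumes X: "\<sigma> \<in> X (int m)" and im: "Suc k \<le> m"
    and lo: "\<And>t. - int k \<le> t \<Longrightarrow> t \<le> int k \<Longrightarrow> H \<sigma> k t \<ge> int k"
    and t: "- int (Suc k) \<le> t" "t \<le> int (Suc k)"
  shows "H \<sigma> (Suc k) t \<ge> int (Suc k)"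
proof -
  consider "t = - int (Suc k)" | "t = int (Suc k)" | "- int k \<le> t \<and> t \<le> int k" using t by linarith
  then show ?thesis
  proof cases
    case 1 then show ?thesis using H_start[where \<sigma>=\<sigma> and i="Suc k"] by simp
  next
    case 2 then show ?thesis using H_end[OF X im] by simp
  next
    case 3
    then have "H \<sigma> k t < H \<sigma> (Suc k) t" using X_nb_order[OF X, of k t] im by simp
    then show ?thesis using lo[of t] 3 by simp
  qed
qed

lemma X_up:
  assumes X: "\<sigma> \<in> X (int m)" and im: "i < m"
    and hi: "\<And>t. - int (Suc i) \<le> t \<Longrightarrow> t \<le> int (Suc i) \<Longrightarrow> H \<sigma> (Suc i) t \<le> int (Suc i)"
    and t: "- int i \<le> t" "t \<le> int i"
  shows "H \<sigma> i t \<le> int i"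
  using X_nb_order[OF X im t] hi[of t] t by simp

lemma hgt_rep: "hgt p (replicate n Flat) t = snd p"
proof (induction n arbitrary: p)
  case 0 then show ?case by (cases p) simp
next
  case (Suc n) then show ?case by (cases p) simp
qed

lemma count0_rep: "cA ss = 0 \<Longrightarrow> cD ss = 0 \<Longrightarrow> ss = replicate (cF ss) Flat"
proof (induction ss)
  case (Cons s ss) then show ?case by (cases s) auto
qed simp

lemma X_flat:
  assumes X: "\<sigma> \<in> X (int m)" and im: "i \<le> m" and c: "cA (\<sigma> i) = 0"
  shows "\<sigma> i = replicate i Flat" "H \<sigma> i t = int i"
proof -
  show r: "\<sigma> i = replicate i Flat" using X_counts[OF X im] c count0_rep[of "\<sigma> i"] by simp
  show "H \<sigma> i t = int i" by (subst r) (simp add: hgt_rep Pt_def)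
qed

fun hts :: "int \<Rightarrow> sstep list \<Rightarrow> int set" where
  "hts y [] = {y}"
| "hts y (Asc # ss) = insert y (hts (y+1) ss)"
| "hts y (Desc # ss) = insert y (hts (y-1) ss)"
| "hts y (Flat # ss) = insert y (hts y ss)"

lemma hts_self: "y \<in> hts y ss"
proof (cases ss)
  case (Cons s ss') then show ?thesis by (cases s) auto
qed simp

lemma verts_hts: "snd ` set (verts p ss) = hts (snd p) ss"
proof (induction ss arbitrary: p)
  case Nil then show ?case by simp
next
  case (Cons s ss)
  then show ?case by (cases s; cases p) auto
qed

lemma hts_const: "hts y ss \<subseteq> {y} \<Longrightarrow> cA ss = 0"
proof (induction ss arbitrary: y)
  case Nil then show ?case by simp
next
  case (Cons s ss)
  show ?case
  proof (cases s)
    case Asc then show ?thesis using Cons.prems hts_self[of "y+1" ss] by auto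
  next
    case Desc then show ?thesis using Cons.prems hts_self[of "y-1" ss] by auto
  next
    case Flat then show ?thesis using Cons by auto
  qed
qed

lemma X_verts_H:
  assumes X: "\<sigma> \<in> X (int m)" and im: "i \<le> m" and v: "v \<in> set (verts (Pt i) (\<sigma> i))"
  shows "- int i \<le> fst v" "fst v \<le> int i" "H \<sigma> i (fst v) = snd v"
  using verts_x[OF v] X_fst_end[OF X im] hgt_vert[OF v] by (auto simp: Pt_def)

lemma X_nonflat:
  assumes X: "\<sigma> \<in> X (int m)" and im: "i \<le> m"
    and h: "\<And>t. - int i \<le> t \<Longrightarrow> t \<le> int i \<Longrightarrow> H \<sigma> i t = int i"
  shows "cA (\<sigma> i) = 0"
proof -
  have "hts (int i) (\<sigma> i) \<subseteq> {int i}"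
  proof
    fix y assume "y \<in> hts (int i) (\<sigma> i)"
    then have "y \<in> snd ` set (verts (Pt i) (\<sigma> i))" using verts_hts[of "Pt i" "\<sigma> i"] by (simp add: Pt_def)
    then obtain v where v: "v \<in> set (verts (Pt i) (\<sigma> i))" "y = snd v" by auto
    show "y \<in> {int i}" using X_verts_H[OF X im v(1)] h v(2) by force
  qed
  then show ?thesis using hts_const by blast
qed

lemma X_lowhts:
  assumes X: "\<sigma> \<in> X (int m)" and im: "i \<le> m"
    and h: "\<And>t. - int i \<le> t \<Longrightarrow> t \<le> int i \<Longrightarrow> H \<sigma> i t \<ge> int i"
  shows "\<forall>y \<in> hts (int i) (\<sigma> i). y \<ge> int i"
proof
  fix y assume "y \<in> hts (int i) (\<sigma> i)"
  then have "y \<in> snd ` set (verts (Pt i) (\<sigma> i))" using verts_hts[of "Pt i" "\<sigma> i"] by (simp add: Pt_def)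
  then obtain v where v: "v \<in> set (verts (Pt i) (\<sigma> i))" "y = snd v" by auto
  show "y \<ge> int i" using X_verts_H[OF X im v(1)] h v(2) by force
qed

lemma X_zero: "\<sigma> \<in> X (int m) \<Longrightarrow> cA (\<sigma> 0) = 0"
  using X_counts[of \<sigma> m 0] by simp

lemma asc_two: "i \<le> m \<Longrightarrow> j \<le> m \<Longrightarrow> i \<noteq> j \<Longrightarrow> cA (\<sigma> i) + cA (\<sigma> j) \<le> asc m \<sigma>"
proof -
  assume a: "i \<le> m" "j \<le> m" "i \<noteq> j"
  have "cA (\<sigma> i) + cA (\<sigma> j) = (\<Sum>k\<in>{i,j}. cA (\<sigma> k))" using a by simp
  also have "... \<le> (\<Sum>k\<le>m. cA (\<sigma> k))" by (rule sum_mono2) (use a in auto)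
  finally show ?thesis by (simp add: asc_def)
qed

lemma asc_three: "i \<le> m \<Longrightarrow> j \<le> m \<Longrightarrow> k \<le> m \<Longrightarrow> i \<noteq> j \<Longrightarrow> i \<noteq> k \<Longrightarrow> j \<noteq> k \<Longrightarrow>
   cA (\<sigma> i) + cA (\<sigma> j) + cA (\<sigma> k) \<le> asc m \<sigma>"
proof -
  assume a: "i \<le> m" "j \<le> m" "k \<le> m" "i \<noteq> j" "i \<noteq> k" "j \<noteq> k"
  have "cA (\<sigma> i) + cA (\<sigma> j) + cA (\<sigma> k) = (\<Sum>l\<in>{i,j,k}. cA (\<sigma> l))" using a by simp
  also have "... \<le> (\<Sum>l\<le>m. cA (\<sigma> l))" by (rule sum_mono2) (use a in auto)
  finally show ?thesis by (simp add: asc_def)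
qed

lemma asc_one: "i \<le> m \<Longrightarrow> cA (\<sigma> i) \<le> asc m \<sigma>"
  unfolding asc_def by (rule member_le_sum) auto

lemma X_chain:
  assumes X: "\<sigma> \<in> X (int m)" and a2: "asc m \<sigma> \<le> 2" and im: "i < m" and nf: "cA (\<sigma> i) \<ge> 1"
  shows "cA (\<sigma> (Suc i)) \<ge> 1"
proof (rule ccontr)
  assume "\<not> ?thesis"
  then have f: "cA (\<sigma> (Suc i)) = 0" by simp
  have up: "\<And>t. - int i \<le> t \<Longrightarrow> t \<le> int i \<Longrightarrow> H \<sigma> i t \<le> int i"
    using X_up[OF X im] X_flat(2)[OF X _ f] im by simp
  obtain k where k: "i = Suc k" using nf X_zero[OF X] by (cases i) auto
  show False
  proof (cases "cA (\<sigma> k) = 0")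
    case True
    have "\<And>t. - int i \<le> t \<Longrightarrow> t \<le> int i \<Longrightarrow> H \<sigma> i t \<ge> int i"
      using X_down[OF X, of k] X_flat(2)[OF X _ True] k im by simp
    then have "cA (\<sigma> i) = 0" using X_nonflat[OF X, of i] up im by force
    then show False using nf by simp
  next
    case False
    obtain l where l: "k = Suc l" using False X_zero[OF X] by (cases k) auto
    have "cA (\<sigma> l) = 0"
    proof (rule ccontr)
      assume "cA (\<sigma> l) \<noteq> 0"
      then have "cA (\<sigma> l) + cA (\<sigma> k) + cA (\<sigma> i) \<ge> 3" using False nf by simp
      moreover have "cA (\<sigma> l) + cA (\<sigma> k) + cA (\<sigma> i) \<le> asc m \<sigma>" using asc_three[of l m k i] k l im by simp
      ultimately show False using a2 by simp
    qed
    then have lo: "\<And>t. - int k \<le> t \<Longrightarrow> t \<le> int k \<Longrightarrow> H \<sigma> k t \<ge> int k"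
      using X_down[OF X, of l] X_flat(2)[OF X, of l] k l im by simp
    have "\<And>t. - int k \<le> t \<Longrightarrow> t \<le> int k \<Longrightarrow> H \<sigma> k t \<le> int k"
    proof -
      fix t assume t: "- int k \<le> t" "t \<le> int k"
      have "H \<sigma> k t < H \<sigma> i t" using X_nb_order[OF X, of k t] t k im by simp
      moreover have "H \<sigma> i t \<le> int i" using up[of t] t k by simp
      ultimately show "H \<sigma> k t \<le> int k" using k by simp
    qed
    then have "cA (\<sigma> k) = 0" using X_nonflat[OF X, of k] lo k im by force
    then show False using False by simp
  qed
qed

lemma X_lowflat:
  assumes X: "\<sigma> \<in> X (int m)" and a2: "asc m \<sigma> \<le> 2" and im: "i + 2 \<le> m"
  shows "cA (\<sigma> i) = 0"
proof (rule ccontr)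
  assume "cA (\<sigma> i) \<noteq> 0"
  then have "cA (\<sigma> (Suc i)) \<ge> 1" "cA (\<sigma> (Suc (Suc i))) \<ge> 1"
    using X_chain[OF X a2, of i] X_chain[OF X a2, of "Suc i"] im by auto
  moreover have "cA (\<sigma> i) + cA (\<sigma> (Suc i)) + cA (\<sigma> (Suc (Suc i))) \<le> asc m \<sigma>"
    using asc_three[of i m "Suc i" "Suc (Suc i)"] im by simp
  ultimately show False using a2 \<open>cA (\<sigma> i) \<noteq> 0\<close> by simp
qed



fun pw :: "(int \<Rightarrow> real) \<Rightarrow> int \<Rightarrow> sstep list \<Rightarrow> real" where
  "pw d y [] = 1"
| "pw d y (Asc # w) = pw d (y+1) w"
| "pw d y (Desc # w) = d y * pw d (y-1) w"
| "pw d y (Flat # w) = pw d y w"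

lemma pathW_eq: "pathW d R p ss = R ^ cF ss * pw d (snd p) ss"
proof (induction ss arbitrary: p)
  case Nil then show ?case by simp
next
  case (Cons s ss) then show ?case by (cases s; cases p) (auto simp: move_snd)
qed

definition kap :: "nat \<Rightarrow> nat" where "kap m = (\<Sum>i\<le>m. i)"
definition cw :: "(int \<Rightarrow> real) \<Rightarrow> nat \<Rightarrow> (nat \<Rightarrow> sstep list) \<Rightarrow> real" where
  "cw d m \<sigma> = (\<Prod>i\<le>m. pw d (int i) (\<sigma> i))"

lemma asc_le: "\<sigma> \<in> X (int m) \<Longrightarrow> asc m \<sigma> \<le> kap m"
  unfolding asc_def kap_def by (rule sum_mono) (use X_counts in fastforce)

lemma weight_eq:
  assumes X: "\<sigma> \<in> X (int m)"
  shows "(\<Prod>i\<le>m. pathW d R (Pt i) (\<sigma> i)) = cw d m \<sigma> * R ^ (kap m - asc m \<sigma>)"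
proof -
  have "(\<Prod>i\<le>m. pathW d R (Pt i) (\<sigma> i)) = (\<Prod>i\<le>m. R ^ cF (\<sigma> i) * pw d (int i) (\<sigma> i))"
    by (simp add: pathW_eq Pt_def)
  also have "... = (\<Prod>i\<le>m. R ^ cF (\<sigma> i)) * cw d m \<sigma>" by (simp add: prod.distrib cw_def)
  also have "(\<Prod>i\<le>m. R ^ cF (\<sigma> i)) = R ^ (\<Sum>i\<le>m. cF (\<sigma> i))" by (simp add: power_sum)
  also have "(\<Sum>i\<le>m. cF (\<sigma> i)) = kap m - asc m \<sigma>"
  proof -
    have "(\<Sum>i\<le>m. cF (\<sigma> i)) + asc m \<sigma> = kap m"
      unfolding asc_def kap_def sum.distrib[symmetric] by (rule sum.cong) (use X_counts[OF X] in auto)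
    then show ?thesis by simp
  qed
  finally show ?thesis by simp
qed

lemma X_len: "\<sigma> \<in> X (int m) \<Longrightarrow> i \<le> m \<Longrightarrow> length (\<sigma> i) \<le> 2 * m"
  using X_counts[of \<sigma> m i] len_count[of "\<sigma> i"] by simp

lemma X_finite: "finite (X (int m))"
proof -
  let ?L = "{xs. set xs \<subseteq> {Asc, Desc, Flat} \<and> length xs \<le> 2 * m}"
  have fL: "finite ?L" by (rule finite_lists_length_le) simp
  have sub: "set xs \<subseteq> {Asc, Desc, Flat}" for xs
  proof
    fix s show "s \<in> set xs \<Longrightarrow> s \<in> {Asc, Desc, Flat}" by (cases s) auto
  qed
  have "X (int m) \<subseteq> {f. \<forall>x. (x \<in> {..m} \<longrightarrow> f x \<in> ?L) \<and> (x \<notin> {..m} \<longrightarrow> f x = [])}"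
  proof
    fix \<sigma> assume s: "\<sigma> \<in> X (int m)"
    have "\<forall>x. (x \<in> {..m} \<longrightarrow> \<sigma> x \<in> ?L) \<and> (x \<notin> {..m} \<longrightarrow> \<sigma> x = [])"
    proof (intro allI conjI impI)
      fix x assume "x \<in> {..m}" then show "\<sigma> x \<in> ?L" using X_len[OF s, of x] sub[of "\<sigma> x"] by simp
    next
      fix x assume "x \<notin> {..m}" then show "\<sigma> x = []" using X_out[OF s, of x] by simp
    qed
    then show "\<sigma> \<in> {f. \<forall>x. (x \<in> {..m} \<longrightarrow> f x \<in> ?L) \<and> (x \<notin> {..m} \<longrightarrow> f x = [])}" by simp
  qed
  moreover have "finite {f. \<forall>x. (x \<in> {..m} \<longrightarrow> f x \<in> ?L) \<and> (x \<notin> {..m} \<longrightarrow> f x = [])}"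
    by (rule finite_set_of_finite_funs) (use fL in auto)
  ultimately show ?thesis by (rule finite_subset)
qed

definition Cc :: "(int \<Rightarrow> real) \<Rightarrow> nat \<Rightarrow> nat \<Rightarrow> real" where
  "Cc d m k = (\<Sum>\<sigma>\<in>{\<sigma>\<in>X (int m). asc m \<sigma> = k}. cw d m \<sigma>)"
definition Ep :: "(int \<Rightarrow> real) \<Rightarrow> nat \<Rightarrow> real poly" where
  "Ep d m = (\<Sum>\<sigma>\<in>{\<sigma>\<in>X (int m). asc m \<sigma> \<ge> 3}. monom (cw d m \<sigma>) (kap m - asc m \<sigma>))"

lemma Ep_deg: "degree (Ep d m) \<le> kap m - 3"
  unfolding Ep_def
  by (rule degree_sum_le) (auto simp: X_finite intro: order.trans[OF degree_monom_le])

lemma Ep_zero: "kap m < 3 \<Longrightarrow> Ep d m = 0"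
proof -
  assume "kap m < 3"
  then have "{\<sigma>\<in>X (int m). asc m \<sigma> \<ge> 3} = {}" using asc_le[of _ m] by fastforce
  then show ?thesis unfolding Ep_def by (metis (no_types, lifting) sum.empty)
qed

lemma decomp:
  "(\<Sum>\<sigma>\<in>X (int m). \<Prod>i\<le>m. pathW d R (Pt i) (\<sigma> i)) =
     Cc d m 0 * R ^ kap m + Cc d m 1 * R ^ (kap m - 1) + Cc d m 2 * R ^ (kap m - 2) + poly (Ep d m) R"
proof -
  let ?X = "X (int m)"
  have "(\<Sum>\<sigma>\<in>?X. \<Prod>i\<le>m. pathW d R (Pt i) (\<sigma> i)) = (\<Sum>\<sigma>\<in>?X. cw d m \<sigma> * R ^ (kap m - asc m \<sigma>))"
    by (rule sum.cong) (auto simp: weight_eq)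
  also have "... = (\<Sum>\<sigma>\<in>{\<sigma>\<in>?X. asc m \<sigma> = 0}. cw d m \<sigma> * R ^ (kap m - asc m \<sigma>))
      + (\<Sum>\<sigma>\<in>{\<sigma>\<in>?X. asc m \<sigma> = 1}. cw d m \<sigma> * R ^ (kap m - asc m \<sigma>))
      + (\<Sum>\<sigma>\<in>{\<sigma>\<in>?X. asc m \<sigma> = 2}. cw d m \<sigma> * R ^ (kap m - asc m \<sigma>))
      + (\<Sum>\<sigma>\<in>{\<sigma>\<in>?X. asc m \<sigma> \<ge> 3}. cw d m \<sigma> * R ^ (kap m - asc m \<sigma>))"
  proof -
    let ?f = "\<lambda>\<sigma>. cw d m \<sigma> * R ^ (kap m - asc m \<sigma>)"
    define A0 where "A0 = {\<sigma>\<in>?X. asc m \<sigma> = 0}"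
    define A1 where "A1 = {\<sigma>\<in>?X. asc m \<sigma> = 1}"
    define A2 where "A2 = {\<sigma>\<in>?X. asc m \<sigma> = 2}"
    define A3 where "A3 = {\<sigma>\<in>?X. asc m \<sigma> \<ge> 3}"
    have fin: "finite A0" "finite A1" "finite A2" "finite A3"
      unfolding A0_def A1_def A2_def A3_def using X_finite[of m] by auto
    have u: "?X = ((A0 \<union> A1) \<union> A2) \<union> A3" unfolding A0_def A1_def A2_def A3_def by auto
    have "sum ?f ?X = sum ?f ((A0 \<union> A1) \<union> A2) + sum ?f A3"
      unfolding u by (rule sum.union_disjoint) (use fin in \<open>auto simp: A0_def A1_def A2_def A3_def\<close>)
    also have "sum ?f ((A0 \<union> A1) \<union> A2) = sum ?f (A0 \<union> A1) + sum ?f A2"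
      by (rule sum.union_disjoint) (use fin in \<open>auto simp: A0_def A1_def A2_def A3_def\<close>)
    also have "sum ?f (A0 \<union> A1) = sum ?f A0 + sum ?f A1"
      by (rule sum.union_disjoint) (use fin in \<open>auto simp: A0_def A1_def A2_def A3_def\<close>)
    finally show ?thesis unfolding A0_def A1_def A2_def A3_def .
  qed
  also have "(\<Sum>\<sigma>\<in>{\<sigma>\<in>?X. asc m \<sigma> = 0}. cw d m \<sigma> * R ^ (kap m - asc m \<sigma>)) = Cc d m 0 * R ^ kap m"
    by (simp add: Cc_def sum_distrib_right)
  also have "(\<Sum>\<sigma>\<in>{\<sigma>\<in>?X. asc m \<sigma> = 1}. cw d m \<sigma> * R ^ (kap m - asc m \<sigma>)) = Cc d m 1 * R ^ (kap m - 1)"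
    by (simp add: Cc_def sum_distrib_right)
  also have "(\<Sum>\<sigma>\<in>{\<sigma>\<in>?X. asc m \<sigma> = 2}. cw d m \<sigma> * R ^ (kap m - asc m \<sigma>)) = Cc d m 2 * R ^ (kap m - 2)"
    by (simp add: Cc_def sum_distrib_right)
  also have "(\<Sum>\<sigma>\<in>{\<sigma>\<in>?X. asc m \<sigma> \<ge> 3}. cw d m \<sigma> * R ^ (kap m - asc m \<sigma>)) = poly (Ep d m) R"
    by (simp add: Ep_def poly_sum poly_monom)
  finally show ?thesis .
qed



definition nf :: "sstep list \<Rightarrow> sstep list" where "nf ss = filter (\<lambda>s. s \<noteq> Flat) ss"

lemma nf_simps[simp]: "nf [] = []" "nf (Flat # ss) = nf ss" "nf (Asc # ss) = Asc # nf ss" "nf (Desc # ss) = Desc # nf ss"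
  by (auto simp: nf_def)

lemma nf_props: "cA (nf ss) = cA ss \<and> cD (nf ss) = cD ss \<and> cF (nf ss) = 0 \<and> length ss = length (nf ss) + cF ss
   \<and> (\<forall>y. hts y (nf ss) = hts y ss) \<and> (\<forall>d y. pw d y (nf ss) = pw d y ss) \<and> Flat \<notin> set (nf ss)"
proof (induction ss)
  case Nil then show ?case by simp
next
  case (Cons s ss) then show ?case by (cases s) (auto simp: hts_self insert_absorb)
qed

lemma nf_cA: "cA (nf ss) = cA ss" using nf_props[of ss] by blast
lemma nf_cD: "cD (nf ss) = cD ss" using nf_props[of ss] by blast
lemma nf_cF: "cF (nf ss) = 0" using nf_props[of ss] by blast
lemma nf_len: "length ss = length (nf ss) + cF ss" using nf_props[of ss] by blast
lemma nf_hts: "hts y (nf ss) = hts y ss" using nf_props[of ss] by blast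
lemma nf_pw: "pw d y (nf ss) = pw d y ss" using nf_props[of ss] by blast
lemma nf_noF: "Flat \<notin> set (nf ss)" using nf_props[of ss] by blast

definition S :: "nat \<Rightarrow> sstep list \<Rightarrow> sstep list set" where
  "S L w = {ss. length ss = L \<and> nf ss = w}"

lemma S_0: "S 0 w = (if w = [] then {[]} else {})"
  by (auto simp: S_def)

lemma S_Suc: assumes "Flat \<notin> set w"
  shows "S (Suc L) w = Cons Flat ` S L w \<union> (if w = [] then {} else Cons (hd w) ` S L (tl w))"
proof
  show "S (Suc L) w \<subseteq> Cons Flat ` S L w \<union> (if w = [] then {} else Cons (hd w) ` S L (tl w))"
  proof
    fix ss assume "ss \<in> S (Suc L) w"
    then obtain s ss' where ss: "ss = s # ss'" "length ss' = L" "nf (s # ss') = w"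
      by (cases ss) (auto simp: S_def)
    show "ss \<in> Cons Flat ` S L w \<union> (if w = [] then {} else Cons (hd w) ` S L (tl w))"
      using ss by (cases s) (auto simp: S_def)
  qed
next
  show "Cons Flat ` S L w \<union> (if w = [] then {} else Cons (hd w) ` S L (tl w)) \<subseteq> S (Suc L) w"
  proof
    fix ss assume a: "ss \<in> Cons Flat ` S L w \<union> (if w = [] then {} else Cons (hd w) ` S L (tl w))"
    show "ss \<in> S (Suc L) w"
    proof (cases "ss \<in> Cons Flat ` S L w")
      case True then show ?thesis by (auto simp: S_def)
    next
      case False
      then obtain ss' where "w \<noteq> []" "ss = hd w # ss'" "ss' \<in> S L (tl w)" using a by (auto split: if_splits)
      moreover have "hd w \<noteq> Flat" using assms \<open>w \<noteq> []\<close> by (cases w) auto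
      ultimately show ?thesis by (cases "hd w"; cases w) (auto simp: S_def)
    qed
  qed
qed

lemma S_card: "Flat \<notin> set w \<Longrightarrow> finite (S L w) \<and> card (S L w) = L choose length w"
proof (induction L arbitrary: w)
  case 0 then show ?case by (simp add: S_0)
next
  case (Suc L)
  show ?case
  proof (cases w)
    case Nil
    then have "S (Suc L) w = Cons Flat ` S L w" using S_Suc[OF Suc.prems] by simp
    then show ?thesis using Suc.IH[OF Suc.prems] Nil by (simp add: card_image)
  next
    case (Cons c w')
    have c: "c \<noteq> Flat" "Flat \<notin> set w'" using Suc.prems Cons by auto
    have e: "S (Suc L) w = Cons Flat ` S L w \<union> Cons c ` S L w'" using S_Suc[OF Suc.prems] Cons by simp
    have "Cons Flat ` S L w \<inter> Cons c ` S L w' = {}" using c by auto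
    then have "card (S (Suc L) w) = card (S L w) + card (S L w')"
      unfolding e using Suc.IH[OF Suc.prems] Suc.IH[OF c(2)]
      by (simp add: card_Un_disjoint card_image)
    then show ?thesis using e Suc.IH[OF Suc.prems] Suc.IH[OF c(2)] Cons by simp
  qed
qed

lemma X_intro:
  assumes "\<And>i. i > m \<Longrightarrow> \<sigma> i = []" "\<And>i. i \<le> m \<Longrightarrow> endpt (Pt i) (\<sigma> i) = Qt i"
    "\<And>i j. i \<le> m \<Longrightarrow> j \<le> m \<Longrightarrow> i \<noteq> j \<Longrightarrow> set (verts (Pt i) (\<sigma> i)) \<inter> set (verts (Pt j) (\<sigma> j)) = {}"
  shows "\<sigma> \<in> X (int m)"
proof -
  have "(\<lambda>i. endpt (Pt i) (\<sigma> i)) ` {..m} = Qt ` {..m}" using assms(2) by (rule image_cong[OF refl]) simp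
  then show ?thesis unfolding X_def using assms(1,3) by auto
qed

lemma disj_hts: "hts (snd p1) ss1 \<inter> hts (snd p2) ss2 = {} \<Longrightarrow> set (verts p1 ss1) \<inter> set (verts p2 ss2) = {}"
  using verts_hts[of p1 ss1] verts_hts[of p2 ss2] by auto

lemma disj_hgt:
  assumes "\<And>t. fst p1 \<le> t \<Longrightarrow> t \<le> fst (endpt p1 ss1) \<Longrightarrow> fst p2 \<le> t \<Longrightarrow> t \<le> fst (endpt p2 ss2)
     \<Longrightarrow> hgt p1 ss1 t \<noteq> hgt p2 ss2 t"
  shows "set (verts p1 ss1) \<inter> set (verts p2 ss2) = {}"
proof (rule ccontr)
  assume "\<not> ?thesis"
  then obtain v where v: "v \<in> set (verts p1 ss1)" "v \<in> set (verts p2 ss2)" by auto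
  have "hgt p1 ss1 (fst v) = snd v" "hgt p2 ss2 (fst v) = snd v" using hgt_vert v by auto
  then show False using assms[of "fst v"] verts_x[OF v(1)] verts_x[OF v(2)] by simp
qed

lemma cnt_rep[simp]: "count_list (replicate n x) y = (if x = y then n else 0)"
  by (induction n) auto

lemma hts_rep: "hts y (replicate n Flat) = {y}"
  by (induction n) auto

lemma endpt_rep: "endpt (Pt i) (replicate i Flat) = Qt i"
  using endpt_fst[of "Pt i" "replicate i Flat"] endpt_snd[of "Pt i" "replicate i Flat"]
  by (simp add: Pt_def Qt_def prod_eq_iff)

lemma endpt_gen: "cA ss = cD ss \<Longrightarrow> cA ss + cF ss = i \<Longrightarrow> endpt (Pt i) ss = Qt i"
  using endpt_fst[of "Pt i" ss] endpt_snd[of "Pt i" ss]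
  by (simp add: Pt_def Qt_def prod_eq_iff)

lemma pw_rep: "pw d y (replicate n Flat) = 1"
  by (induction n) auto

definition cfg1 :: "nat \<Rightarrow> sstep list \<Rightarrow> nat \<Rightarrow> sstep list" where
  "cfg1 m ss i = (if i = m then ss else if i < m then replicate i Flat else [])"

lemma cfg1_X:
  assumes ss: "nf ss = w" and cAD: "cA w = cD w" and len: "length ss = m + cA w"
    and lo: "\<forall>y\<in>hts (int m) w. y \<ge> int m"
  shows "cfg1 m ss \<in> X (int m)"
proof (rule X_intro)
  fix i assume "i > m" then show "cfg1 m ss i = []" by (simp add: cfg1_def)
next
  fix i assume "i \<le> m"
  show "endpt (Pt i) (cfg1 m ss i) = Qt i"
  proof (cases "i = m")
    case True
    have "cA ss = cD ss" "cA ss + cF ss = m" using ss cAD len nf_cA[of ss] nf_cD[of ss] nf_len[of ss] len_count[of w] nf_cF[of ss]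
      by auto
    then show ?thesis using True endpt_gen by (simp add: cfg1_def)
  next
    case False then show ?thesis using \<open>i \<le> m\<close> by (simp add: cfg1_def endpt_rep)
  qed
next
  fix i j assume ij: "i \<le> m" "j \<le> m" "i \<noteq> j"
  have h: "\<And>k. k \<le> m \<Longrightarrow> hts (snd (Pt k)) (cfg1 m ss k) \<subseteq> (if k = m then {int m..} else {int k})"
    using lo nf_hts[of "int m" ss] ss by (auto simp: cfg1_def Pt_def hts_rep)
  show "set (verts (Pt i) (cfg1 m ss i)) \<inter> set (verts (Pt j) (cfg1 m ss j)) = {}"
    apply (rule disj_hts)
    using h[OF ij(1)] h[OF ij(2)] ij by (auto split: if_splits)
qed

lemma cfg1_asc: "asc m (cfg1 m ss) = cA ss"
proof -
  have "asc m (cfg1 m ss) = (\<Sum>i\<le>m. if i = m then cA ss else 0)"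
    unfolding asc_def by (rule sum.cong) (auto simp: cfg1_def)
  then show ?thesis by simp
qed

lemma cfg1_cw: "cw d m (cfg1 m ss) = pw d (int m) ss"
proof -
  have "cw d m (cfg1 m ss) = (\<Prod>i\<le>m. if i = m then pw d (int m) ss else 1)"
    unfolding cw_def by (rule prod.cong) (auto simp: cfg1_def pw_rep)
  then show ?thesis by simp
qed

lemma cfg1_inj: "inj (cfg1 m)"
  by (rule injI) (metis cfg1_def)

lemma X_cfg1:
  assumes X: "\<sigma> \<in> X (int m)" and f: "\<And>i. i < m \<Longrightarrow> cA (\<sigma> i) = 0"
  shows "\<sigma> = cfg1 m (\<sigma> m)" "asc m \<sigma> = cA (\<sigma> m)"
proof -
  show e: "\<sigma> = cfg1 m (\<sigma> m)"
  proof
    fix i show "\<sigma> i = cfg1 m (\<sigma> m) i"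
      using X_out[OF X, of i] X_flat(1)[OF X _ f[of i]] by (auto simp: cfg1_def)
  qed
  show "asc m \<sigma> = cA (\<sigma> m)" by (subst e) (simp add: cfg1_asc)
qed

lemma pat2: "Flat \<notin> set w \<Longrightarrow> length w = 2 \<Longrightarrow> cA w = 1 \<Longrightarrow> \<forall>y\<in>hts y0 w. y \<ge> y0 \<Longrightarrow> w = [Asc, Desc]"
proof -
  assume a: "Flat \<notin> set w" "length w = 2" "cA w = 1" "\<forall>y\<in>hts y0 w. y \<ge> y0"
  obtain a b where w: "w = [a, b]" using a(2) by (auto simp: length_Suc_conv numeral_eq_Suc)
  show ?thesis using a unfolding w by (cases a; cases b) auto
qed

lemma pat4: "Flat \<notin> set w \<Longrightarrow> length w = 4 \<Longrightarrow> cA w = 2 \<Longrightarrow> \<forall>y\<in>hts y0 w. y \<ge> y0 \<Longrightarrow>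
   w = [Asc, Asc, Desc, Desc] \<or> w = [Asc, Desc, Asc, Desc]"
proof -
  assume a: "Flat \<notin> set w" "length w = 4" "cA w = 2" "\<forall>y\<in>hts y0 w. y \<ge> y0"
  obtain a b c e where w: "w = [a, b, c, e]" using a(2) by (auto simp: length_Suc_conv numeral_eq_Suc)
  show ?thesis using a unfolding w by (cases a; cases b; cases c; cases e; simp)
qed



lemma sum_S: "(\<Sum>ss\<in>S L w. pw d y ss) = real (card (S L w)) * pw d y w"
proof -
  have "(\<Sum>ss\<in>S L w. pw d y ss) = (\<Sum>ss\<in>S L w. pw d y w)"
  proof (rule sum.cong)
    fix ss assume "ss \<in> S L w"
    then have "nf ss = w" by (simp add: S_def)
    then show "pw d y ss = pw d y w" using nf_pw[of d y ss] by simp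
  qed simp
  then show ?thesis by simp
qed

lemma hts_AD: "hts y [Asc, Desc] = {y, y+1}" by auto

lemma top_only:
  assumes X: "\<sigma> \<in> X (int m)" and f: "\<And>i. i < m \<Longrightarrow> cA (\<sigma> i) = 0" and k: "asc m \<sigma> = k" "k \<ge> 1"
  shows "\<sigma> = cfg1 m (\<sigma> m)" "length (\<sigma> m) = m + k" "length (nf (\<sigma> m)) = 2 * k"
    "cA (nf (\<sigma> m)) = k" "Flat \<notin> set (nf (\<sigma> m))" "\<forall>y\<in>hts (int m) (nf (\<sigma> m)). y \<ge> int m"
proof -
  show e: "\<sigma> = cfg1 m (\<sigma> m)" using X_cfg1[OF X f] by blast
  have a: "cA (\<sigma> m) = k" using X_cfg1(2)[OF X f] k by simp
  obtain l where l: "m = Suc l" using a k X_zero[OF X] by (cases m) auto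
  have lo: "\<And>t. - int (Suc l) \<le> t \<Longrightarrow> t \<le> int (Suc l) \<Longrightarrow> H \<sigma> (Suc l) t \<ge> int (Suc l)"
    using X_down[OF X, of l] X_flat(2)[OF X _ f[of l]] l by simp
  have "\<forall>y\<in>hts (int m) (\<sigma> m). y \<ge> int m" using X_lowhts[OF X, of m] lo l by simp
  then show "\<forall>y\<in>hts (int m) (nf (\<sigma> m)). y \<ge> int m" by (simp add: nf_hts)
  have c: "cD (\<sigma> m) = k" "cF (\<sigma> m) + k = m" using X_counts[OF X, of m] a by auto
  show "length (\<sigma> m) = m + k" using c a len_count[of "\<sigma> m"] by simp
  show "length (nf (\<sigma> m)) = 2 * k" using c a len_count[of "\<sigma> m"] nf_len[of "\<sigma> m"] by simp
  show "cA (nf (\<sigma> m)) = k" using a nf_cA by simp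
  show "Flat \<notin> set (nf (\<sigma> m))" by (rule nf_noF)
qed

lemma cfg1_in_S:
  assumes w: "Flat \<notin> set w" "cA w = cD w" "\<forall>y\<in>hts (int m) w. y \<ge> int m"
    and ss: "ss \<in> S (m + cA w) w"
  shows "cfg1 m ss \<in> X (int m)" "asc m (cfg1 m ss) = cA w" "cw d m (cfg1 m ss) = pw d (int m) w"
proof -
  have nf: "nf ss = w" "length ss = m + cA w" using ss by (auto simp: S_def)
  show "cfg1 m ss \<in> X (int m)" by (rule cfg1_X[OF nf(1) w(2) nf(2) w(3)])
  show "asc m (cfg1 m ss) = cA w" using cfg1_asc nf_cA[of ss] nf by simp
  show "cw d m (cfg1 m ss) = pw d (int m) w" using cfg1_cw nf_pw[of d "int m" ss] nf by simp
qed

lemma sum_cfg1: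
  assumes w: "Flat \<notin> set w" "cA w = cD w" "\<forall>y\<in>hts (int m) w. y \<ge> int m"
  shows "(\<Sum>\<sigma>\<in>cfg1 m ` S (m + cA w) w. cw d m \<sigma>) = real (card (S (m + cA w) w)) * pw d (int m) w"
proof -
  have "(\<Sum>\<sigma>\<in>cfg1 m ` S (m + cA w) w. cw d m \<sigma>) = (\<Sum>ss\<in>S (m + cA w) w. cw d m (cfg1 m ss))"
    by (rule sum.reindex[unfolded comp_def]) (meson cfg1_inj inj_on_subset subset_UNIV)
  also have "... = (\<Sum>ss\<in>S (m + cA w) w. pw d (int m) w)"
    by (rule sum.cong) (use cfg1_in_S[OF w] in auto)
  finally show ?thesis by simp
qed

lemma low_zero:
  assumes X: "\<sigma> \<in> X (int m)" and a2: "asc m \<sigma> \<le> 2" and i: "i < m" and top: "i + 1 = m \<Longrightarrow> cA (\<sigma> i) = 0"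
  shows "cA (\<sigma> i) = 0"
proof (cases "i + 2 \<le> m")
  case True then show ?thesis using X_lowflat[OF X a2] by simp
next
  case False then show ?thesis using top i by simp
qed

lemma C0_eq: "{\<sigma>\<in>X (int m). asc m \<sigma> = 0} = {cfg1 m (replicate m Flat)}"
proof
  show "{\<sigma>\<in>X (int m). asc m \<sigma> = 0} \<subseteq> {cfg1 m (replicate m Flat)}"
  proof
    fix \<sigma> assume s: "\<sigma> \<in> {\<sigma>\<in>X (int m). asc m \<sigma> = 0}"
    then have X: "\<sigma> \<in> X (int m)" and a: "asc m \<sigma> = 0" by auto
    have z: "\<And>i. i \<le> m \<Longrightarrow> cA (\<sigma> i) = 0" using asc_one[of _ m \<sigma>] a by fastforce
    have "\<sigma> = cfg1 m (\<sigma> m)" using X_cfg1[OF X] z by simp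
    also have "\<sigma> m = replicate m Flat" using X_flat(1)[OF X _ z] by simp
    finally show "\<sigma> \<in> {cfg1 m (replicate m Flat)}" by simp
  qed
next
  have "replicate m Flat \<in> S (m + cA []) []" by (simp add: S_def nf_def)
  then show "{cfg1 m (replicate m Flat)} \<subseteq> {\<sigma>\<in>X (int m). asc m \<sigma> = 0}"
    using cfg1_in_S[of "[]" m "replicate m Flat"] by simp
qed

lemma C0_val: "Cc d m 0 = 1"
  unfolding Cc_def C0_eq by (simp add: cfg1_cw pw_rep)

lemma C1_eq: "{\<sigma>\<in>X (int m). asc m \<sigma> = 1} = cfg1 m ` S (m + 1) [Asc, Desc]"
proof
  show "{\<sigma>\<in>X (int m). asc m \<sigma> = 1} \<subseteq> cfg1 m ` S (m + 1) [Asc, Desc]"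
  proof
    fix \<sigma> assume s: "\<sigma> \<in> {\<sigma>\<in>X (int m). asc m \<sigma> = 1}"
    then have X: "\<sigma> \<in> X (int m)" and a: "asc m \<sigma> = 1" by auto
    have f: "\<And>i. i < m \<Longrightarrow> cA (\<sigma> i) = 0"
    proof (rule low_zero[OF X _ _])
      fix i assume i: "i < m" "i + 1 = m"
      show "cA (\<sigma> i) = 0"
      proof (rule ccontr)
        assume "cA (\<sigma> i) \<noteq> 0"
        then have "cA (\<sigma> (Suc i)) \<ge> 1" using X_chain[OF X _ i(1)] a by simp
        then show False using asc_two[of i m "Suc i" \<sigma>] i a \<open>cA (\<sigma> i) \<noteq> 0\<close> by simp
      qed
    qed (use a in auto)
    note T = top_only[OF X f a]
    have "nf (\<sigma> m) = [Asc, Desc]" using pat2[of "nf (\<sigma> m)" "int m"] T by simp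
    then have "\<sigma> m \<in> S (m + 1) [Asc, Desc]" using T by (simp add: S_def)
    then show "\<sigma> \<in> cfg1 m ` S (m + 1) [Asc, Desc]" using T(1) by blast
  qed
next
  show "cfg1 m ` S (m + 1) [Asc, Desc] \<subseteq> {\<sigma>\<in>X (int m). asc m \<sigma> = 1}"
    using cfg1_in_S[of "[Asc, Desc]" m] by auto
qed

lemma S_card': "Flat \<notin> set w \<Longrightarrow> length w = n \<Longrightarrow> card (S L w) = L choose n"
  using S_card by blast

lemma C1_val: "Cc d m 1 = real (m + 1 choose 2) * d (int m + 1)"
proof -
  have e1: "cA [Asc, Desc] = 1" by simp
  have e2: "pw d (int m) [Asc, Desc] = d (int m + 1)" by simp
  have e3: "card (S (m + 1) [Asc, Desc]) = (m + 1) choose 2" by (rule S_card') simp_all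
  have "Cc d m 1 = (\<Sum>\<sigma>\<in>cfg1 m ` S (m + cA [Asc, Desc]) [Asc, Desc]. cw d m \<sigma>)"
    by (simp only: Cc_def C1_eq e1)
  also have "... = real (card (S (m + cA [Asc, Desc]) [Asc, Desc])) * pw d (int m) [Asc, Desc]"
    by (rule sum_cfg1) auto
  also have "... = real ((m + 1) choose 2) * d (int m + 1)" by (simp only: e1 e2 e3)
  finally show ?thesis .
qed

definition W4a where "W4a = [Asc, Asc, Desc, Desc]"
definition W4b where "W4b = [Asc, Desc, Asc, Desc]"

lemma C2a_eq: "{\<sigma>\<in>X (int m). asc m \<sigma> = 2 \<and> \<not> (1 \<le> m \<and> cA (\<sigma> (m - 1)) \<noteq> 0)} =
   cfg1 m ` S (m + 2) W4a \<union> cfg1 m ` S (m + 2) W4b"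
proof
  show "{\<sigma>\<in>X (int m). asc m \<sigma> = 2 \<and> \<not> (1 \<le> m \<and> cA (\<sigma> (m - 1)) \<noteq> 0)} \<subseteq>
     cfg1 m ` S (m + 2) W4a \<union> cfg1 m ` S (m + 2) W4b"
  proof
    fix \<sigma> assume s: "\<sigma> \<in> {\<sigma>\<in>X (int m). asc m \<sigma> = 2 \<and> \<not> (1 \<le> m \<and> cA (\<sigma> (m - 1)) \<noteq> 0)}"
    then have X: "\<sigma> \<in> X (int m)" and a: "asc m \<sigma> = 2" and t: "\<not> (1 \<le> m \<and> cA (\<sigma> (m - 1)) \<noteq> 0)" by auto
    have f: "\<And>i. i < m \<Longrightarrow> cA (\<sigma> i) = 0"
    proof (rule low_zero[OF X _ _])
      fix i assume i: "i < m" "i + 1 = m"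
      then show "cA (\<sigma> i) = 0" using t by (metis add_diff_cancel_right' le_add2)
    qed (use a in auto)
    have k1: "(1::nat) \<le> 2" by simp
    note T = top_only[OF X f a k1]
    have "nf (\<sigma> m) = W4a \<or> nf (\<sigma> m) = W4b" using pat4[of "nf (\<sigma> m)" "int m"] T by (simp add: W4a_def W4b_def)
    then have "\<sigma> m \<in> S (m + 2) W4a \<or> \<sigma> m \<in> S (m + 2) W4b" using T by (auto simp: S_def)
    then show "\<sigma> \<in> cfg1 m ` S (m + 2) W4a \<union> cfg1 m ` S (m + 2) W4b" using T(1) by blast
  qed
next
  have h: "\<forall>y\<in>hts (int m) W4a. y \<ge> int m" "\<forall>y\<in>hts (int m) W4b. y \<ge> int m"
    by (auto simp: W4a_def W4b_def)
  have c: "cA W4a = 2" "cA W4b = 2" "cD W4a = 2" "cD W4b = 2" by (auto simp: W4a_def W4b_def)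
  have nF: "Flat \<notin> set W4a" "Flat \<notin> set W4b" by (auto simp: W4a_def W4b_def)
  have r: "\<And>ss. m \<ge> 1 \<Longrightarrow> cA (cfg1 m ss (m - 1)) = 0" by (simp add: cfg1_def)
  show "cfg1 m ` S (m + 2) W4a \<union> cfg1 m ` S (m + 2) W4b \<subseteq>
    {\<sigma>\<in>X (int m). asc m \<sigma> = 2 \<and> \<not> (1 \<le> m \<and> cA (\<sigma> (m - 1)) \<noteq> 0)}"
    using cfg1_in_S[of W4a m] cfg1_in_S[of W4b m] h c nF r by auto
qed

lemma C2a_val: "(\<Sum>\<sigma>\<in>{\<sigma>\<in>X (int m). asc m \<sigma> = 2 \<and> \<not> (1 \<le> m \<and> cA (\<sigma> (m - 1)) \<noteq> 0)}. cw d m \<sigma>) =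
   real (m + 2 choose 4) * (d (int m + 2) * d (int m + 1) + d (int m + 1) * d (int m + 1))"
proof -
  have h: "\<forall>y\<in>hts (int m) W4a. y \<ge> int m" "\<forall>y\<in>hts (int m) W4b. y \<ge> int m"
    by (auto simp: W4a_def W4b_def)
  have c: "cA W4a = 2" "cA W4b = 2" "cD W4a = 2" "cD W4b = 2" by (auto simp: W4a_def W4b_def)
  have nF: "Flat \<notin> set W4a" "Flat \<notin> set W4b" by (auto simp: W4a_def W4b_def)
  have fin: "finite (cfg1 m ` S (m + 2) W4a)" "finite (cfg1 m ` S (m + 2) W4b)"
    using S_card[OF nF(1)] S_card[OF nF(2)] by auto
  have dis: "cfg1 m ` S (m + 2) W4a \<inter> cfg1 m ` S (m + 2) W4b = {}"
    using cfg1_inj[of m] by (auto simp: S_def W4a_def W4b_def dest: injD)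
  have "(\<Sum>\<sigma>\<in>{\<sigma>\<in>X (int m). asc m \<sigma> = 2 \<and> \<not> (1 \<le> m \<and> cA (\<sigma> (m - 1)) \<noteq> 0)}. cw d m \<sigma>) =
     (\<Sum>\<sigma>\<in>cfg1 m ` S (m + 2) W4a. cw d m \<sigma>) + (\<Sum>\<sigma>\<in>cfg1 m ` S (m + 2) W4b. cw d m \<sigma>)"
    unfolding C2a_eq by (rule sum.union_disjoint[OF fin dis])
  also have "... = real (card (S (m + cA W4a) W4a)) * pw d (int m) W4a + real (card (S (m + cA W4b) W4b)) * pw d (int m) W4b"
    using sum_cfg1[of W4a m d] sum_cfg1[of W4b m d] h c nF by simp
  also have "... = real (m + 2 choose 4) * pw d (int m) W4a + real (m + 2 choose 4) * pw d (int m) W4b"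
  proof -
    have "card (S (m + 2) W4a) = (m + 2) choose 4" by (rule S_card') (auto simp: W4a_def)
    moreover have "card (S (m + 2) W4b) = (m + 2) choose 4" by (rule S_card') (auto simp: W4b_def)
    ultimately show ?thesis by (simp only: c)
  qed
  also have "pw d (int m) W4a = d (int m + 2) * d (int m + 1)" by (simp add: W4a_def add.commute)
  also have "pw d (int m) W4b = d (int m + 1) * d (int m + 1)" by (simp add: W4b_def)
  also have "real (m + 2 choose 4) * (d (int m + 2) * d (int m + 1)) + real (m + 2 choose 4) * (d (int m + 1) * d (int m + 1))
     = real (m + 2 choose 4) * (d (int m + 2) * d (int m + 1) + d (int m + 1) * d (int m + 1))"
    by (simp only: distrib_left)
  finally show ?thesis .
qed



lemma endpt_append: "endpt p (xs @ ys) = endpt (endpt p xs) ys"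
  by (induction xs arbitrary: p) auto

lemma hgt_append: "hgt p (xs @ ys) t = (if t \<le> fst (endpt p xs) then hgt p xs t else hgt (endpt p xs) ys t)"
proof (induction xs arbitrary: p)
  case Nil then show ?case by (cases p) (simp add: hgt_le)
next
  case (Cons s xs)
  obtain x y where p: "p = (x, y)" by fastforce
  have m: "fst (endpt (move p s) xs) \<ge> fst (move p s)" using verts_x_aux by blast
  have "fst (move p s) = x + (if s = Flat then 2 else 1)" using move_fst[of p s] p by simp
  then show ?case using Cons.IH[of "move p s"] m p by (cases "s = Flat") auto
qed

lemma endpt_rep_gen: "endpt (x, y) (replicate n Flat) = (x + 2 * int n, y)"
  using endpt_fst[of "(x,y)" "replicate n Flat"] endpt_snd[of "(x,y)" "replicate n Flat"]
  by (simp add: prod_eq_iff)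

definition mk2 :: "nat \<Rightarrow> nat \<Rightarrow> nat \<Rightarrow> sstep list" where
  "mk2 L i j = replicate i Flat @ Asc # replicate (j - i - 1) Flat @ Desc # replicate (L - j - 1) Flat"

lemma nf_append: "nf (xs @ ys) = nf xs @ nf ys" by (simp add: nf_def)
lemma nf_rep: "nf (replicate n Flat) = []" by (simp add: nf_def)

lemma mk2_S: "i < j \<Longrightarrow> j < L \<Longrightarrow> mk2 L i j \<in> S L [Asc, Desc]"
  by (simp add: mk2_def S_def nf_append nf_rep)

lemma hgt_mk2: "i < j \<Longrightarrow> hgt (x, y) (mk2 L i j) t = y + (if x + 2 * int i < t \<and> t < x + 2 * int j then 1 else 0)"
proof -
  assume ij: "i < j"
  define b where "b = j - i - 1"
  have jb: "int j = int i + int b + 1" using ij b_def by simp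
  have e1: "endpt (x, y) (replicate i Flat) = (x + 2 * int i, y)" by (rule endpt_rep_gen)
  have e2: "endpt (x + 2 * int i + 1, y + 1) (replicate b Flat) = (x + 2 * int i + 1 + 2 * int b, y + 1)"
    by (rule endpt_rep_gen)
  have "mk2 L i j = replicate i Flat @ [Asc] @ replicate b Flat @ [Desc] @ replicate (L - j - 1) Flat"
    by (simp add: mk2_def b_def)
  then show ?thesis
    by (simp add: hgt_append endpt_append e1 e2 hgt_rep endpt_rep_gen hgt_le jb)
qed

lemma nf_split: "nf ss = c # w \<Longrightarrow> c \<noteq> Flat \<Longrightarrow> \<exists>n rest. ss = replicate n Flat @ c # rest \<and> nf rest = w"
proof (induction ss)
  case Nil then show ?case by simp
next
  case (Cons s ss)
  show ?case
  proof (cases "s = Flat")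
    case True
    then obtain n rest where "ss = replicate n Flat @ c # rest" "nf rest = w" using Cons by auto
    then show ?thesis using True by (intro exI[of _ "Suc n"] exI[of _ rest]) auto
  next
    case False
    then have "s = c" "nf ss = w" using Cons.prems by (cases s; auto)+
    then show ?thesis by (intro exI[of _ 0] exI[of _ ss]) auto
  qed
qed

lemma nf_nil: "nf ss = [] \<Longrightarrow> ss = replicate (length ss) Flat"
proof (induction ss)
  case (Cons s ss) then show ?case by (cases s) auto
qed simp

lemma S_mk2: "ss \<in> S L [Asc, Desc] \<Longrightarrow> \<exists>i j. i < j \<and> j < L \<and> ss = mk2 L i j"
proof -
  assume "ss \<in> S L [Asc, Desc]"
  then have ss: "length ss = L" "nf ss = [Asc, Desc]" by (auto simp: S_def)
  obtain a r1 where r1: "ss = replicate a Flat @ Asc # r1" "nf r1 = [Desc]" using nf_split[OF ss(2)] by auto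
  obtain b r2 where r2: "r1 = replicate b Flat @ Desc # r2" "nf r2 = []" using nf_split[OF r1(2)] by auto
  have r3: "r2 = replicate (length r2) Flat" using nf_nil[OF r2(2)] .
  have L: "L = a + b + length r2 + 2" using ss(1) r1(1) r2(1) by simp
  have "ss = mk2 L a (a + b + 1)"
    unfolding mk2_def using r1(1) r2(1) r3 L by simp
  then show ?thesis using L by (intro exI[of _ a] exI[of _ "a + b + 1"]) auto
qed

lemma mk2_inj: "i < j \<Longrightarrow> i' < j' \<Longrightarrow> mk2 L i j = mk2 L i' j' \<Longrightarrow> i = i' \<and> j = j'"
proof -
  assume a: "i < j" "i' < j'" "mk2 L i j = mk2 L i' j'"
  have h: "\<And>t. (if 2 * int i < t \<and> t < 2 * int j then 1 else 0) = (if 2 * int i' < t \<and> t < 2 * int j' then 1 else (0::int))"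
  proof -
    fix t
    have "hgt (0,0) (mk2 L i j) t = hgt (0,0) (mk2 L i' j') t" using a(3) by simp
    then show "(if 2 * int i < t \<and> t < 2 * int j then 1 else 0) = (if 2 * int i' < t \<and> t < 2 * int j' then 1 else (0::int))"
      unfolding hgt_mk2[OF a(1)] hgt_mk2[OF a(2)] by simp
  qed
  have "i = i'"
  proof (rule ccontr)
    assume ne: "i \<noteq> i'"
    show False
    proof (cases "i < i'")
      case True
      have P: "2 * int i < 2 * int i + 1 \<and> 2 * int i + 1 < 2 * int j" using a by simp
      have nQ: "\<not> (2 * int i' < 2 * int i + 1)" using True by simp
      from h[of "2 * int i + 1"] P nQ show False by simp
    next
      case False
      then have T: "i' < i" using ne by simp
      have P: "2 * int i' < 2 * int i' + 1 \<and> 2 * int i' + 1 < 2 * int j'" using a by simp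
      have nQ: "\<not> (2 * int i < 2 * int i' + 1)" using T by simp
      from h[of "2 * int i' + 1"] P nQ show False by simp
    qed
  qed
  moreover have "j = j'"
  proof (rule ccontr)
    assume ne: "j \<noteq> j'"
    show False
    proof (cases "j < j'")
      case True
      have P: "2 * int i' < 2 * int j \<and> 2 * int j < 2 * int j'" using a True \<open>i = i'\<close> by simp
      have nQ: "\<not> (2 * int j < 2 * int j)" by simp
      from h[of "2 * int j"] P nQ show False by simp
    next
      case False
      then have T: "j' < j" using ne by simp
      have P: "2 * int i < 2 * int j' \<and> 2 * int j' < 2 * int j" using a T \<open>i = i'\<close> by simp
      have nQ: "\<not> (2 * int j' < 2 * int j')" by simp
      from h[of "2 * int j'"] P nQ show False by simp
    qed
  qed
  ultimately show ?thesis by simp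
qed



definition cfg2 :: "nat \<Rightarrow> sstep list \<Rightarrow> sstep list \<Rightarrow> nat \<Rightarrow> sstep list" where
  "cfg2 m u v i = (if i = m then v else if Suc i = m then u else if i < m then replicate i Flat else [])"

definition Pm :: "nat \<Rightarrow> (sstep list \<times> sstep list) set" where
  "Pm m = {(u, v). u \<in> S m [Asc, Desc] \<and> v \<in> S (Suc m) [Asc, Desc] \<and>
     (\<forall>t. 1 - int m \<le> t \<and> t \<le> int m - 1 \<longrightarrow> hgt (Pt (m - 1)) u t < hgt (Pt m) v t)}"

lemma path_AD:
  assumes X: "\<sigma> \<in> X (int m)" and im: "i \<le> m" and c: "cA (\<sigma> i) = 1"
    and lo: "\<And>t. - int i \<le> t \<Longrightarrow> t \<le> int i \<Longrightarrow> H \<sigma> i t \<ge> int i"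
  shows "\<sigma> i \<in> S (Suc i) [Asc, Desc]"
proof -
  have h: "\<forall>y\<in>hts (int i) (nf (\<sigma> i)). y \<ge> int i" using X_lowhts[OF X im lo] by (simp add: nf_hts)
  have cc: "cD (\<sigma> i) = 1" "cF (\<sigma> i) + 1 = i" using X_counts[OF X im] c by auto
  have l: "length (nf (\<sigma> i)) = 2" using cc c len_count[of "\<sigma> i"] nf_len[of "\<sigma> i"] by simp
  have "nf (\<sigma> i) = [Asc, Desc]" using pat2[OF nf_noF l _ h] nf_cA[of "\<sigma> i"] c by simp
  moreover have "length (\<sigma> i) = Suc i" using cc c len_count[of "\<sigma> i"] by simp
  ultimately show ?thesis by (simp add: S_def)
qed

lemma S_AD: "ss \<in> S L [Asc, Desc] \<Longrightarrow> cA ss = 1 \<and> cD ss = 1 \<and> cF ss + 2 = L \<and> (\<forall>y. hts y ss = {y, y+1})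
   \<and> (\<forall>d y. pw d y ss = d (y + 1))"
proof -
  assume "ss \<in> S L [Asc, Desc]"
  then have n: "nf ss = [Asc, Desc]" "length ss = L" by (auto simp: S_def)
  show ?thesis using n nf_cA[of ss] nf_cD[of ss] nf_len[of ss] nf_hts[of _ ss, symmetric] nf_pw[of _ _ ss, symmetric]
    by auto
qed

lemma C2b_sub:
  assumes X: "\<sigma> \<in> X (int m)" and a: "asc m \<sigma> = 2" and m1: "1 \<le> m" and nz: "cA (\<sigma> (m - 1)) \<noteq> 0"
  shows "\<sigma> \<in> (\<lambda>(u, v). cfg2 m u v) ` Pm m"
proof -
  obtain l where l: "m = Suc l" using m1 by (cases m) auto
  have a2: "asc m \<sigma> \<le> 2" using a by simp
  have c1: "cA (\<sigma> m) \<ge> 1" using X_chain[OF X a2, of l] nz l by simp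
  have cl: "cA (\<sigma> l) = 1" "cA (\<sigma> m) = 1" using asc_two[of l m m \<sigma>] c1 nz l a by auto
  obtain k where k: "l = Suc k" using cl X_zero[OF X] by (cases l) auto
  have fl: "\<And>i. i < l \<Longrightarrow> cA (\<sigma> i) = 0" using X_lowflat[OF X a2] l by simp
  have lol: "\<And>t. - int l \<le> t \<Longrightarrow> t \<le> int l \<Longrightarrow> H \<sigma> l t \<ge> int l"
    using X_down[OF X, of k] X_flat(2)[OF X _ fl[of k]] k l by simp
  have lom: "\<And>t. - int m \<le> t \<Longrightarrow> t \<le> int m \<Longrightarrow> H \<sigma> m t \<ge> int m"
    using X_down[OF X, of l] lol l by simp
  have u: "\<sigma> l \<in> S m [Asc, Desc]" using path_AD[OF X _ cl(1) lol] l by simp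
  have v: "\<sigma> m \<in> S (Suc m) [Asc, Desc]" using path_AD[OF X _ cl(2) lom] by simp
  have cond: "\<forall>t. 1 - int m \<le> t \<and> t \<le> int m - 1 \<longrightarrow> hgt (Pt (m - 1)) (\<sigma> l) t < hgt (Pt m) (\<sigma> m) t"
    using X_nb_order[OF X, of l] l by auto
  have e: "\<sigma> = cfg2 m (\<sigma> l) (\<sigma> m)"
  proof
    fix i show "\<sigma> i = cfg2 m (\<sigma> l) (\<sigma> m) i"
      using X_out[OF X, of i] X_flat(1)[OF X _ fl[of i]] l by (auto simp: cfg2_def)
  qed
  have "(\<sigma> l, \<sigma> m) \<in> Pm m" using u v cond l by (simp add: Pm_def)
  then show ?thesis using e by force
qed

lemma Pm_m: "(u, v) \<in> Pm m \<Longrightarrow> \<exists>k. m = Suc (Suc k)"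
proof -
  assume "(u, v) \<in> Pm m"
  then have "u \<in> S m [Asc, Desc]" by (simp add: Pm_def)
  then have "m \<ge> 2" using S_AD by fastforce
  then show ?thesis by (metis add_2_eq_Suc le_Suc_ex)
qed

lemma cfg2_props:
  assumes P: "(u, v) \<in> Pm m"
  shows "cfg2 m u v \<in> X (int m)" "asc m (cfg2 m u v) = 2" "cA (cfg2 m u v (m - 1)) \<noteq> 0"
    "cw d m (cfg2 m u v) = d (int m) * d (int m + 1)"
proof -
  obtain k where k: "m = Suc (Suc k)" using Pm_m[OF P] by blast
  define l where "l = Suc k"
  have u: "u \<in> S m [Asc, Desc]" and v: "v \<in> S (Suc m) [Asc, Desc]"
    and cond: "\<And>t. 1 - int m \<le> t \<Longrightarrow> t \<le> int m - 1 \<Longrightarrow> hgt (Pt l) u t < hgt (Pt m) v t"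
    using P k by (auto simp: Pm_def l_def)
  note U = S_AD[OF u] and V = S_AD[OF v]
  have ml: "m = Suc l" using k l_def by simp
  have cA_eq: "\<And>i. i \<le> m \<Longrightarrow> cA (cfg2 m u v i) = (if i = m then 1 else if i = l then 1 else 0)"
    using U V ml by (auto simp: cfg2_def)
  have eu: "endpt (Pt l) u = Qt l" by (rule endpt_gen) (use U ml in auto)
  show X: "cfg2 m u v \<in> X (int m)"
  proof (rule X_intro)
    fix i assume "i > m" then show "cfg2 m u v i = []" by (simp add: cfg2_def)
  next
    fix i assume i: "i \<le> m"
    show "endpt (Pt i) (cfg2 m u v i) = Qt i"
    proof -
      consider "i = m" | "i = l" | "i < l" using i ml by linarith
      then show ?thesis
      proof cases
        case 1 then show ?thesis using V by (simp add: cfg2_def endpt_gen)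
      next
        case 2 then show ?thesis using eu ml by (simp add: cfg2_def)
      next
        case 3 then show ?thesis using ml by (simp add: cfg2_def endpt_rep)
      qed
    qed
  next
    fix i j assume ij: "i \<le> m" "j \<le> m" "i \<noteq> j"
    have R: "\<And>i. i \<le> m \<Longrightarrow> hts (snd (Pt i)) (cfg2 m u v i) =
        (if i = m then {int m, int m + 1} else if i = l then {int l, int l + 1} else {int i})"
      using U V ml by (auto simp: cfg2_def Pt_def hts_rep)
    have D: "set (verts (Pt l) u) \<inter> set (verts (Pt m) v) = {}"
    proof (rule disj_hgt)
      fix t assume t: "fst (Pt l) \<le> t" "t \<le> fst (endpt (Pt l) u)"
      then have "1 - int m \<le> t" "t \<le> int m - 1" using eu ml by (auto simp: Pt_def Qt_def)
      then show "hgt (Pt l) u t \<noteq> hgt (Pt m) v t" using cond by force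
    qed
    show "set (verts (Pt i) (cfg2 m u v i)) \<inter> set (verts (Pt j) (cfg2 m u v j)) = {}"
    proof (cases "(i = l \<and> j = m) \<or> (i = m \<and> j = l)")
      case True
      then show ?thesis using D ml by (auto simp: cfg2_def)
    next
      case False
      show ?thesis
        by (rule disj_hts) (use R[OF ij(1)] R[OF ij(2)] ij False ml in auto)
    qed
  qed
  show "asc m (cfg2 m u v) = 2"
  proof -
    have "asc m (cfg2 m u v) = (\<Sum>i\<le>Suc (Suc k). if i = m then 1 else if i = l then 1 else 0)"
      unfolding asc_def by (rule sum.cong) (use cA_eq k in auto)
    also have "... = 2" using ml l_def k by (simp add: sum.atMost_Suc)
    finally show ?thesis .
  qed
  show "cA (cfg2 m u v (m - 1)) \<noteq> 0" using cA_eq[of l] ml by simp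
  show "cw d m (cfg2 m u v) = d (int m) * d (int m + 1)"
  proof -
    have "cw d m (cfg2 m u v) = (\<Prod>i\<le>Suc (Suc k). if i = m then d (int m + 1) else if i = l then d (int m) else 1)"
      unfolding cw_def by (rule prod.cong) (use U V ml k in \<open>auto simp: cfg2_def pw_rep\<close>)
    also have "... = d (int m) * d (int m + 1)" using ml l_def k by (simp add: prod.atMost_Suc)
    finally show ?thesis .
  qed
qed

lemma C2b_eq: "{\<sigma>\<in>X (int m). asc m \<sigma> = 2 \<and> (1 \<le> m \<and> cA (\<sigma> (m - 1)) \<noteq> 0)} = (\<lambda>(u, v). cfg2 m u v) ` Pm m"
proof
  show "{\<sigma>\<in>X (int m). asc m \<sigma> = 2 \<and> (1 \<le> m \<and> cA (\<sigma> (m - 1)) \<noteq> 0)} \<subseteq> (\<lambda>(u, v). cfg2 m u v) ` Pm m"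
    using C2b_sub by blast
next
  show "(\<lambda>(u, v). cfg2 m u v) ` Pm m \<subseteq> {\<sigma>\<in>X (int m). asc m \<sigma> = 2 \<and> (1 \<le> m \<and> cA (\<sigma> (m - 1)) \<noteq> 0)}"
  proof
    fix \<sigma> assume "\<sigma> \<in> (\<lambda>(u, v). cfg2 m u v) ` Pm m"
    then obtain u v where P: "(u, v) \<in> Pm m" "\<sigma> = cfg2 m u v" by auto
    obtain k where "m = Suc (Suc k)" using Pm_m[OF P(1)] by blast
    then show "\<sigma> \<in> {\<sigma>\<in>X (int m). asc m \<sigma> = 2 \<and> (1 \<le> m \<and> cA (\<sigma> (m - 1)) \<noteq> 0)}"
      using cfg2_props[OF P(1)] P(2) by simp
  qed
qed

lemma Pm_fin: "finite (Pm m)"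
proof -
  have "Pm m \<subseteq> S m [Asc, Desc] \<times> S (Suc m) [Asc, Desc]" by (auto simp: Pm_def)
  moreover have "finite (S m [Asc, Desc] \<times> S (Suc m) [Asc, Desc])" using S_card[of "[Asc, Desc]"] by simp
  ultimately show ?thesis by (rule finite_subset)
qed

lemma cfg2_inj: "inj_on (\<lambda>(u, v). cfg2 m u v) (Pm m)"
proof (rule inj_onI)
  fix x y assume x: "x \<in> Pm m" and y: "y \<in> Pm m" and e: "(\<lambda>(u, v). cfg2 m u v) x = (\<lambda>(u, v). cfg2 m u v) y"
  obtain u v u' v' where xy: "x = (u, v)" "y = (u', v')" by fastforce
  obtain k where k: "m = Suc (Suc k)" using Pm_m x xy by blast
  have "cfg2 m u v m = cfg2 m u' v' m" "cfg2 m u v (Suc k) = cfg2 m u' v' (Suc k)" using e xy by auto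
  then show "x = y" using xy k by (simp add: cfg2_def)
qed

lemma C2b_val: "(\<Sum>\<sigma>\<in>{\<sigma>\<in>X (int m). asc m \<sigma> = 2 \<and> (1 \<le> m \<and> cA (\<sigma> (m - 1)) \<noteq> 0)}. cw d m \<sigma>) =
   real (card (Pm m)) * (d (int m) * d (int m + 1))"
proof -
  have "(\<Sum>\<sigma>\<in>{\<sigma>\<in>X (int m). asc m \<sigma> = 2 \<and> (1 \<le> m \<and> cA (\<sigma> (m - 1)) \<noteq> 0)}. cw d m \<sigma>) =
     (\<Sum>x\<in>Pm m. cw d m ((\<lambda>(u, v). cfg2 m u v) x))"
    unfolding C2b_eq by (rule sum.reindex[OF cfg2_inj, unfolded comp_def])
  also have "... = (\<Sum>x\<in>Pm m. d (int m) * d (int m + 1))"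
    by (rule sum.cong) (auto simp: cfg2_props)
  finally show ?thesis by simp
qed

lemma C2_split: "Cc d m 2 =
   (\<Sum>\<sigma>\<in>{\<sigma>\<in>X (int m). asc m \<sigma> = 2 \<and> \<not> (1 \<le> m \<and> cA (\<sigma> (m - 1)) \<noteq> 0)}. cw d m \<sigma>) +
   (\<Sum>\<sigma>\<in>{\<sigma>\<in>X (int m). asc m \<sigma> = 2 \<and> (1 \<le> m \<and> cA (\<sigma> (m - 1)) \<noteq> 0)}. cw d m \<sigma>)"
proof -
  have "{\<sigma>\<in>X (int m). asc m \<sigma> = 2} = {\<sigma>\<in>X (int m). asc m \<sigma> = 2 \<and> \<not> (1 \<le> m \<and> cA (\<sigma> (m - 1)) \<noteq> 0)}
     \<union> {\<sigma>\<in>X (int m). asc m \<sigma> = 2 \<and> (1 \<le> m \<and> cA (\<sigma> (m - 1)) \<noteq> 0)}" by auto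
  then show ?thesis unfolding Cc_def
    by (simp only:) (rule sum.union_disjoint, use X_finite in auto)
qed



definition Qs :: "nat \<Rightarrow> ((nat \<times> nat) \<times> (nat \<times> nat)) set" where
  "Qs m = Sigma (Sigma {..<m} (\<lambda>j. {..<j})) (\<lambda>(j, i). {..i} \<times> {Suc j..m})"

definition gq :: "nat \<Rightarrow> (nat \<times> nat) \<times> (nat \<times> nat) \<Rightarrow> sstep list \<times> sstep list" where
  "gq m x = (case x of ((j, i), (i', j')) \<Rightarrow> (mk2 m i j, mk2 (Suc m) i' j'))"

lemma Pm_img: "Pm m = gq m ` Qs m"
proof
  show "Pm m \<subseteq> gq m ` Qs m"
  proof
    fix x assume x: "x \<in> Pm m"
    obtain u v where xuv: "x = (u, v)" by fastforce
    obtain k where k: "m = Suc (Suc k)" using Pm_m x xuv by blast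
    have u: "u \<in> S m [Asc, Desc]" and v: "v \<in> S (Suc m) [Asc, Desc]"
      and cond: "\<And>t. 1 - int m \<le> t \<Longrightarrow> t \<le> int m - 1 \<Longrightarrow> hgt (Pt (m - 1)) u t < hgt (Pt m) v t"
      using x xuv by (auto simp: Pm_def)
    obtain i j where ij: "i < j" "j < m" "u = mk2 m i j" using S_mk2[OF u] by blast
    obtain i' j' where ij': "i' < j'" "j' < Suc m" "v = mk2 (Suc m) i' j'" using S_mk2[OF v] by blast
    have Pl: "Pt (m - 1) = (- int m + 1, int m - 1)" using k by (simp add: Pt_def)
    have Pm': "Pt m = (- int m, int m)" by (simp add: Pt_def)
    have hu: "\<And>t. hgt (Pt (m - 1)) u t = int m - 1 + (if - int m + 1 + 2 * int i < t \<and> t < - int m + 1 + 2 * int j then 1 else 0)"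
      unfolding Pl ij(3) by (rule hgt_mk2[OF ij(1)])
    have hv: "\<And>t. hgt (Pt m) v t = int m + (if - int m + 2 * int i' < t \<and> t < - int m + 2 * int j' then 1 else 0)"
      unfolding Pm' ij'(3) by (rule hgt_mk2[OF ij'(1)])
    have c1: "hgt (Pt (m - 1)) u (- int m + 2 + 2 * int i) < hgt (Pt m) v (- int m + 2 + 2 * int i)"
      by (rule cond) (use ij in auto)
    have c2: "hgt (Pt (m - 1)) u (- int m + 2 * int j) < hgt (Pt m) v (- int m + 2 * int j)"
      by (rule cond) (use ij in auto)
    have "i' \<le> i" using c1 ij unfolding hu hv by (auto split: if_splits)
    moreover have "j < j'" using c2 ij unfolding hu hv by (auto split: if_splits)
    ultimately have "((j, i), (i', j')) \<in> Qs m" using ij ij' by (auto simp: Qs_def)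
    moreover have "x = gq m ((j, i), (i', j'))" using xuv ij ij' by (simp add: gq_def)
    ultimately show "x \<in> gq m ` Qs m" by blast
  qed
next
  show "gq m ` Qs m \<subseteq> Pm m"
  proof
    fix x assume "x \<in> gq m ` Qs m"
    then obtain j i i' j' where q: "j < m" "i < j" "i' \<le> i" "Suc j \<le> j'" "j' \<le> m"
      and x: "x = (mk2 m i j, mk2 (Suc m) i' j')" by (auto simp: Qs_def gq_def)
    obtain l where l: "m = Suc l" using q by (cases m) auto
    have Pl: "Pt (m - 1) = (- int m + 1, int m - 1)" using l by (simp add: Pt_def)
    have Pm': "Pt m = (- int m, int m)" by (simp add: Pt_def)
    have ij': "i' < j'" using q by simp
    have "\<forall>t. 1 - int m \<le> t \<and> t \<le> int m - 1 \<longrightarrow> hgt (Pt (m - 1)) (mk2 m i j) t < hgt (Pt m) (mk2 (Suc m) i' j') t"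
      unfolding Pl Pm' hgt_mk2[OF q(2)] hgt_mk2[OF ij'] using q by (auto split: if_splits)
    moreover have "mk2 m i j \<in> S m [Asc, Desc]" by (rule mk2_S) (use q in auto)
    moreover have "mk2 (Suc m) i' j' \<in> S (Suc m) [Asc, Desc]" by (rule mk2_S) (use q in auto)
    ultimately show "x \<in> Pm m" using x by (simp add: Pm_def)
  qed
qed

lemma gq_inj: "inj_on (gq m) (Qs m)"
proof (rule inj_onI)
  fix x y assume x: "x \<in> Qs m" and y: "y \<in> Qs m" and e: "gq m x = gq m y"
  obtain j i i' j' where xx: "x = ((j, i), (i', j'))" "i < j" "i' < j'" using x by (auto simp: Qs_def)
  obtain J I I' J' where yy: "y = ((J, I), (I', J'))" "I < J" "I' < J'" using y by (auto simp: Qs_def)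
  have "mk2 m i j = mk2 m I J" "mk2 (Suc m) i' j' = mk2 (Suc m) I' J'" using e xx yy by (auto simp: gq_def)
  then show "x = y" using mk2_inj xx yy by metis
qed

lemma card_Pm_sum: "card (Pm m) = (\<Sum>j<m. \<Sum>i<j. (i + 1) * (m - j))"
proof -
  have "card (Pm m) = card (Qs m)" unfolding Pm_img by (rule card_image[OF gq_inj])
  also have "... = (\<Sum>a\<in>Sigma {..<m} (\<lambda>j. {..<j}). card ((\<lambda>(j, i). {..i} \<times> {Suc j..m}) a))"
    unfolding Qs_def by (rule card_SigmaI) auto
  also have "... = (\<Sum>(j, i)\<in>Sigma {..<m} (\<lambda>j. {..<j}). (i + 1) * (m - j))"
    by (rule sum.cong) (auto simp: card_cartesian_product)
  also have "... = (\<Sum>j<m. \<Sum>i<j. (i + 1) * (m - j))" by (rule sum.Sigma[symmetric]) auto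
  finally show ?thesis .
qed

lemma G1: "(\<Sum>i<j. real i + 1) = real j * (real j + 1) / 2"
  by (induction j) (auto simp: field_simps)

lemma G2: "(\<Sum>j<n. real j * (real j + 1) / 2) = (real n - 1) * real n * (real n + 1) / 6"
  by (induction n) (auto simp: field_simps)

lemma G3: "(\<Sum>j<m. (real m - real j) * (real j * (real j + 1) / 2)) = (real m + 2) * (real m + 1) * real m * (real m - 1) / 24"
proof (induction m)
  case 0 then show ?case by simp
next
  case (Suc m)
  have "(\<Sum>j<Suc m. (real (Suc m) - real j) * (real j * (real j + 1) / 2)) =
        (\<Sum>j<Suc m. (real m - real j) * (real j * (real j + 1) / 2)) + (\<Sum>j<Suc m. real j * (real j + 1) / 2)"
  proof -
    have "\<And>j. (real (Suc m) - real j) * (real j * (real j + 1) / 2) =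
       (real m - real j) * (real j * (real j + 1) / 2) + real j * (real j + 1) / 2" by (simp add: field_simps)
    then show ?thesis by (simp only: sum.distrib)
  qed
  also have "(\<Sum>j<Suc m. (real m - real j) * (real j * (real j + 1) / 2)) = (\<Sum>j<m. (real m - real j) * (real j * (real j + 1) / 2))"
    by simp
  also have "(\<Sum>j<Suc m. real j * (real j + 1) / 2) = real m * (real m + 1) * (real m + 2) / 6"
    using G2[of "Suc m"] by (simp add: algebra_simps)
  finally show ?case using Suc by (simp add: field_simps)
qed

lemma card_Pm: "real (card (Pm m)) = (real m + 2) * (real m + 1) * real m * (real m - 1) / 24"
proof -
  have "real (card (Pm m)) = (\<Sum>j<m. \<Sum>i<j. real ((i + 1) * (m - j)))" by (simp add: card_Pm_sum)
  also have "... = (\<Sum>j<m. (real m - real j) * (real j * (real j + 1) / 2))"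
  proof (rule sum.cong)
    fix j assume "j \<in> {..<m}"
    then have jm: "j \<le> m" by simp
    have "\<And>i. real ((i + 1) * (m - j)) = (real i + 1) * (real m - real j)"
      by (simp only: of_nat_mult of_nat_diff[OF jm] of_nat_add of_nat_1)
    then have "(\<Sum>i<j. real ((i + 1) * (m - j))) = (\<Sum>i<j. real i + 1) * (real m - real j)"
      by (simp add: sum_distrib_right)
    then show "(\<Sum>i<j. real ((i + 1) * (m - j))) = (real m - real j) * (real j * (real j + 1) / 2)"
      using G1[of j] by simp
  qed simp
  also have "... = (real m + 2) * (real m + 1) * real m * (real m - 1) / 24" by (rule G3)
  finally show ?thesis .
qed

lemma ch2: "real (n choose 2) = real n * (real n - 1) / 2"
proof (induction n)
  case 0 then show ?case by simp
next
  case (Suc n)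
  have "Suc n choose 2 = (n choose 1) + (n choose 2)" by (simp add: numeral_2_eq_2)
  then show ?case using Suc by (simp add: field_simps)
qed

lemma ch3: "real (n choose 3) = real n * (real n - 1) * (real n - 2) / 6"
proof (induction n)
  case 0 then show ?case by simp
next
  case (Suc n)
  have "Suc n choose 3 = (n choose 2) + (n choose 3)" by (simp add: eval_nat_numeral)
  then show ?case using Suc ch2[of n] by (simp add: field_simps)
qed

lemma ch4: "real (n choose 4) = real n * (real n - 1) * (real n - 2) * (real n - 3) / 24"
proof (induction n)
  case 0 then show ?case by simp
next
  case (Suc n)
  have "Suc n choose 4 = (n choose 3) + (n choose 4)" by (simp add: eval_nat_numeral)
  then show ?case using Suc ch3[of n] by (simp add: field_simps)
qed

lemma kap_val: "2 * kap m = m * (m + 1)"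
  by (induction m) (auto simp: kap_def)

lemma main:
  "(\<Sum>\<sigma>\<in>X (int m). \<Prod>i\<le>m. pathW d R (Pt i) (\<sigma> i)) =
     R ^ kap m + real (m + 1 choose 2) * d (int m + 1) * R ^ (kap m - 1)
     + ((real m + 2) * (real m + 1) * real m * (real m - 1) / 24)
        * (d (int m + 2) * d (int m + 1) + d (int m + 1) * d (int m + 1) + d (int m) * d (int m + 1)) * R ^ (kap m - 2)
     + poly (Ep d m) R"
proof -
  have c2: "Cc d m 2 = ((real m + 2) * (real m + 1) * real m * (real m - 1) / 24)
        * (d (int m + 2) * d (int m + 1) + d (int m + 1) * d (int m + 1) + d (int m) * d (int m + 1))"
  proof -
    define a where "a = d (int m)"
    define b where "b = d (int m + 1)"
    define c where "c = d (int m + 2)"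
    have "Cc d m 2 = real (m + 2 choose 4) * (c * b + b * b) + real (card (Pm m)) * (a * b)"
      unfolding C2_split C2a_val C2b_val a_def b_def c_def by simp
    also have "... = ((real m + 2) * (real m + 1) * real m * (real m - 1) / 24) * (c * b + b * b + a * b)"
      unfolding card_Pm ch4 by (simp add: field_simps)
    finally show ?thesis unfolding a_def b_def c_def .
  qed
  show ?thesis unfolding decomp C0_val C1_val c2 by simp
qed



lemma powi_conv: "j \<le> K \<Longrightarrow> (R::real) powi (int K - int j) = R ^ (K - j)"
proof -
  assume "j \<le> K"
  then have "int K - int j = int (K - j)" by simp
  then show ?thesis by (simp only: power_int_of_nat)
qed

lemma kap_int: "2 * int (kap m) = int m * (int m + 1)"
proof -
  have "int (2 * kap m) = int (m * (m + 1))" using kap_val[of m] by (rule arg_cong)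
  then show ?thesis by (simp add: algebra_simps)
qed

lemma kap_ge3: "m \<ge> 2 \<Longrightarrow> kap m \<ge> 3"
  using kap_val[of m] mult_le_mono[of 2 m 3 "m + 1"] by linarith

lemma kap_ge1: "m \<ge> 1 \<Longrightarrow> kap m \<ge> 1"
  using kap_val[of m] mult_le_mono[of 1 m 2 "m + 1"] by linarith

lemma Ep_bigO: "bigO_poly (Ep d m) (int (kap m) - 3)"
proof (cases "kap m < 3")
  case True then show ?thesis using Ep_zero[OF True] by (simp add: bigO_poly_def)
next
  case False
  then have "nat (int (kap m) - 3) = kap m - 3" by simp
  then show ?thesis using False Ep_deg[of d m] by (simp add: bigO_poly_def)
qed

lemma Np_eq: "Np p R = (\<Sum>\<sigma>\<in>X (int (Suc p)). \<Prod>i\<le>Suc p. pathW (\<lambda>y. of_int y - 1) R (Pt i) (\<sigma> i))"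
proof -
  have "int p + 1 = int (Suc p)" by simp
  then show ?thesis unfolding Np_def W2_def by (simp only: idx_nat)
qed

lemma Dp_eq: "p \<ge> 1 \<Longrightarrow> Dp p R = (\<Sum>\<sigma>\<in>X (int (p - 1)). \<Prod>i\<le>p - 1. pathW (\<lambda>y. of_int y + 1) R (Pt i) (\<sigma> i))"
proof -
  assume "p \<ge> 1"
  then have "int p - 1 = int (p - 1)" by simp
  then show ?thesis unfolding Dp_def W0_def by (simp only: idx_nat)
qed

lemma X_neg: "X (- 1) = {\<lambda>_. []}"
proof -
  have i: "idx (- 1) = {}" by (auto simp: idx_def)
  show ?thesis unfolding X_def i by auto
qed

lemma Dp0: "Dp 0 R = 1"
proof -
  have i: "idx (- 1) = {}" by (auto simp: idx_def)
  show ?thesis unfolding Dp_def W0_def by (simp add: X_neg i)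
qed

theorem theorem6p4:
  fixes p :: nat and \<kappa> :: int
  defines "\<kappa> \<equiv> (int p + 1) * (int p + 2) div 2"
  shows "(\<exists>E. bigO_poly E (\<kappa> - 3) \<and>
            (\<forall>R::real. Np p R = R powi \<kappa>
               + (real p + 1)^2 * (real p + 2) / 2 * R powi (\<kappa> - 1)
               + real p * (real p + 1)^3 * (real p + 2) * (real p + 3) / 8 * R powi (\<kappa> - 2)
               + poly E R))
       \<and> (\<exists>E. bigO_poly E (\<kappa> - 2 * int p - 4) \<and>
            (\<forall>R::real. Dp p R = R powi (\<kappa> - 2 * int p - 1)
               + (real p - 1) * real p * (real p + 1) / 2 * R powi (\<kappa> - 2 * int p - 2)
               + (real p - 2) * (real p - 1) * real p * (real p + 1)^3 / 8
                   * R powi (\<kappa> - 2 * int p - 3)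
               + poly E R))"
proof -
  have ev: "even ((int p + 1) * (int p + 2))" by (cases "even p") auto
  have k2: "2 * \<kappa> = (int p + 1) * (int p + 2)" unfolding \<kappa>_def using ev by simp
  show ?thesis
  proof
    define m where "m = Suc p"
    define K where "K = kap m"
    have "2 * int K = int m * (int m + 1)" using kap_int[of m] K_def by simp
    then have kK: "\<kappa> = int K" using k2 m_def by (simp add: algebra_simps)
    have K1: "K \<ge> 1" using kap_val[of m] K_def m_def by (cases K) auto
    let ?d = "\<lambda>y::int. (of_int y::real) - 1"
    show "\<exists>E. bigO_poly E (\<kappa> - 3) \<and>
            (\<forall>R::real. Np p R = R powi \<kappa>
               + (real p + 1)^2 * (real p + 2) / 2 * R powi (\<kappa> - 1)
               + real p * (real p + 1)^3 * (real p + 2) * (real p + 3) / 8 * R powi (\<kappa> - 2)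
               + poly E R)"
    proof (intro exI conjI allI)
      show "bigO_poly (Ep ?d m) (\<kappa> - 3)" using Ep_bigO[of ?d m] kK K_def by simp
    next
      fix R :: real
      have "Np p R = R ^ K + real (m + 1 choose 2) * ?d (int m + 1) * R ^ (K - 1)
     + ((real m + 2) * (real m + 1) * real m * (real m - 1) / 24)
        * (?d (int m + 2) * ?d (int m + 1) + ?d (int m + 1) * ?d (int m + 1) + ?d (int m) * ?d (int m + 1)) * R ^ (K - 2)
     + poly (Ep ?d m) R"
      proof -
        have e0: "Np p R = (\<Sum>\<sigma>\<in>X (int m). \<Prod>i\<le>m. pathW ?d R (Pt i) (\<sigma> i))"
          unfolding m_def by (rule Np_eq)
        show ?thesis unfolding e0 main[where m=m and d="?d" and R=R] K_def ..
      qed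
      also have "real (m + 1 choose 2) * ?d (int m + 1) = (real p + 1)^2 * (real p + 2) / 2"
        unfolding ch2 m_def by (simp add: field_simps power2_eq_square)
      also have "((real m + 2) * (real m + 1) * real m * (real m - 1) / 24)
        * (?d (int m + 2) * ?d (int m + 1) + ?d (int m + 1) * ?d (int m + 1) + ?d (int m) * ?d (int m + 1))
        = real p * (real p + 1)^3 * (real p + 2) * (real p + 3) / 8"
        unfolding m_def by (simp add: field_simps power3_eq_cube)
      also have "R ^ K = R powi \<kappa>" using kK by simp
      also have "R ^ (K - 1) = R powi (\<kappa> - 1)" using kK powi_conv[OF K1, of R] by simp
      also have "real p * (real p + 1)^3 * (real p + 2) * (real p + 3) / 8 * R ^ (K - 2) =
          real p * (real p + 1)^3 * (real p + 2) * (real p + 3) / 8 * R powi (\<kappa> - 2)"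
      proof (cases "p = 0")
        case True then show ?thesis by simp
      next
        case False
        then have "K \<ge> 2" using kap_ge3[of m] K_def m_def by simp
        then show ?thesis using kK powi_conv[of 2 K R] by simp
      qed
      finally show "Np p R = R powi \<kappa>
               + (real p + 1)^2 * (real p + 2) / 2 * R powi (\<kappa> - 1)
               + real p * (real p + 1)^3 * (real p + 2) * (real p + 3) / 8 * R powi (\<kappa> - 2)
               + poly (Ep ?d m) R" .
    qed
  next
    show "\<exists>E. bigO_poly E (\<kappa> - 2 * int p - 4) \<and>
            (\<forall>R::real. Dp p R = R powi (\<kappa> - 2 * int p - 1)
               + (real p - 1) * real p * (real p + 1) / 2 * R powi (\<kappa> - 2 * int p - 2)
               + (real p - 2) * (real p - 1) * real p * (real p + 1)^3 / 8
                   * R powi (\<kappa> - 2 * int p - 3)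
               + poly E R)"
    proof (cases "p = 0")
      case True
      have k1: "\<kappa> = 1" using k2 True by simp
      show ?thesis
        by (rule exI[of _ 0]) (simp add: True k1 Dp0 bigO_poly_def)
    next
      case False
      define m where "m = p - 1"
      define K where "K = kap m"
      have pm: "p = Suc m" using False m_def by simp
      have "2 * int K = int m * (int m + 1)" using kap_int[of m] K_def by simp
      then have kK: "\<kappa> - 2 * int p - 1 = int K" using k2 pm by (simp add: algebra_simps)
      let ?d = "\<lambda>y::int. (of_int y::real) + 1"
      show ?thesis
      proof (intro exI conjI allI)
        have "\<kappa> - 2 * int p - 4 = int K - 3" using kK by simp
        then show "bigO_poly (Ep ?d m) (\<kappa> - 2 * int p - 4)" using Ep_bigO[of ?d m] K_def by simp
      next
        fix R :: real
        have "Dp p R = R ^ K + real (m + 1 choose 2) * ?d (int m + 1) * R ^ (K - 1)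
       + ((real m + 2) * (real m + 1) * real m * (real m - 1) / 24)
          * (?d (int m + 2) * ?d (int m + 1) + ?d (int m + 1) * ?d (int m + 1) + ?d (int m) * ?d (int m + 1)) * R ^ (K - 2)
       + poly (Ep ?d m) R"
        proof -
          have e0: "Dp p R = (\<Sum>\<sigma>\<in>X (int m). \<Prod>i\<le>m. pathW ?d R (Pt i) (\<sigma> i))"
            unfolding m_def by (rule Dp_eq) (use False in simp)
          show ?thesis unfolding e0 main[where m=m and d="?d" and R=R] K_def ..
        qed
        also have "real (m + 1 choose 2) * ?d (int m + 1) = (real p - 1) * real p * (real p + 1) / 2"
          unfolding ch2 pm by (simp add: field_simps)
        also have "((real m + 2) * (real m + 1) * real m * (real m - 1) / 24)
          * (?d (int m + 2) * ?d (int m + 1) + ?d (int m + 1) * ?d (int m + 1) + ?d (int m) * ?d (int m + 1))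
          = (real p - 2) * (real p - 1) * real p * (real p + 1)^3 / 8"
          unfolding pm by (simp add: field_simps power3_eq_cube)
        also have "R ^ K = R powi (\<kappa> - 2 * int p - 1)" using kK by simp
        also have "(real p - 1) * real p * (real p + 1) / 2 * R ^ (K - 1) =
            (real p - 1) * real p * (real p + 1) / 2 * R powi (\<kappa> - 2 * int p - 2)"
        proof (cases "m = 0")
          case True then show ?thesis using pm by simp
        next
          case False
          then have "K \<ge> 1" using kap_ge1[of m] K_def by simp
          moreover have "\<kappa> - 2 * int p - 2 = int K - int 1" using kK by simp
          ultimately show ?thesis using powi_conv[of 1 K R] by simp
        qed
        also have "(real p - 2) * (real p - 1) * real p * (real p + 1)^3 / 8 * R ^ (K - 2) =
            (real p - 2) * (real p - 1) * real p * (real p + 1)^3 / 8 * R powi (\<kappa> - 2 * int p - 3)"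
        proof (cases "m \<le> 1")
          case True
          then have "(real p - 2) * (real p - 1) = 0" using pm by (cases m) auto
          then show ?thesis by simp
        next
          case False
          then have "K \<ge> 2" using kap_ge3[of m] K_def by simp
          moreover have "\<kappa> - 2 * int p - 3 = int K - int 2" using kK by simp
          ultimately show ?thesis using powi_conv[of 2 K R] by simp
        qed
        finally show "Dp p R = R powi (\<kappa> - 2 * int p - 1)
               + (real p - 1) * real p * (real p + 1) / 2 * R powi (\<kappa> - 2 * int p - 2)
               + (real p - 2) * (real p - 1) * real p * (real p + 1)^3 / 8
                   * R powi (\<kappa> - 2 * int p - 3)
               + poly (Ep ?d m) R" .
      qed
    qed
  qed
qed

end
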